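(* Let $c>0$. There is a constant $C=C(c)$ such that the following holds. Let $p\ge 2$ be an integer and let $\mathcal{F}$ be a finite family of $n$ nonempty subsets ("regions") of $\mathbb{R}^d$ whose dual hypergraph has a hereditarily $c$-linear Delaunay graph. If $\mathcal{F}$ satisfies the $(p,2)$-property, then $\mathcal{F}$ admits a transversal of size at most $C\,p\log p$ (i.e., of size $O(p\log p)$).
   Context: A hypergraph $H=(V,\mathcal{E})$ consists of a finite vertex set $V$ and a collection $\mathcal{E}$ of subsets of $V$. For $S\subseteq V$, $H|_S=(S,\{e\cap S: e\in\mathcal{E}\})$. The Delaunay graph of $H$ is the graph on $V$ whose edges are the hyperedges of size exactly $2$. $H$ has a hereditarily $c$-linear Delaunay graph if for every nonempty $S\subseteq V$ the Delaunay graph of $H|_S$ has fewer than $c|S|$ edges. The dual hypergraph of a family $\mathcal{F}$ of subsets of $\mathbb{R}^d$ has vertex set $\mathcal{F}$ and, for each $x\in\mathbb{R}^d$, the hyperedge $e_x=\{B\in\mathcal{F}: x\in B\}$. $\mathcal{F}$ satisfies the $(p,2)$-property if among any $p$ members of $\mathcal{F}$ some two have nonempty intersection. A transversal of $\mathcal{F}$ is a set of points of $\mathbb{R}^d$ meeting every member of $\mathcal{F}$. *)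

theory Defs
  imports "HOL-Analysis.Analysis"
begin

text \<open>Euclidean space R^d, realised as the real sequences vanishing from index d on
  (so that the dimension d can be quantified inside the statement).\<close>
definition euclid :: "nat \<Rightarrow> (nat \<Rightarrow> real) set" where
  "euclid d = {x. \<forall>i\<ge>d. x i = 0}"

definition restrict_edges :: "'v set set \<Rightarrow> 'v set \<Rightarrow> 'v set set" where
  "restrict_edges E S = (\<lambda>e. e \<inter> S) ` E"

definition delaunay_edges :: "'v set set \<Rightarrow> 'v set set" where
  "delaunay_edges E = {e \<in> E. card e = 2}"

definition hereditarily_linear_delaunay :: "real \<Rightarrow> 'v set \<Rightarrow> 'v set set \<Rightarrow> bool" where
  "hereditarily_linear_delaunay c V E \<longleftrightarrow>
     (\<forall>S. S \<subseteq> V \<and> S \<noteq> {} \<longrightarrow>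
        real (card (delaunay_edges (restrict_edges E S))) < c * real (card S))"

definition dual_edges :: "nat \<Rightarrow> (nat \<Rightarrow> real) set set \<Rightarrow> (nat \<Rightarrow> real) set set set" where
  "dual_edges d F = (\<lambda>x. {B \<in> F. x \<in> B}) ` euclid d"

definition p2_property :: "nat \<Rightarrow> 'a set set \<Rightarrow> bool" where
  "p2_property p F \<longleftrightarrow>
     (\<forall>G. G \<subseteq> F \<and> card G = p \<longrightarrow> (\<exists>A\<in>G. \<exists>B\<in>G. A \<noteq> B \<and> A \<inter> B \<noteq> {}))"

definition is_transversal :: "nat \<Rightarrow> (nat \<Rightarrow> real) set \<Rightarrow> (nat \<Rightarrow> real) set set \<Rightarrow> bool" where
  "is_transversal d T F \<longleftrightarrow> T \<subseteq> euclid d \<and> (\<forall>B\<in>F. T \<inter> B \<noteq> {})"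

end

theory Submission
  imports Defs "HOL-Probability.Probability"
begin

lemma exp_le_one_minus:
  fixes q :: real assumes "0 \<le> q" "q \<le> 1/2" shows "exp (-2*q) \<le> 1 - q"
proof -
  have "- q - 2 * q^2 \<le> ln (1 - q)" using ln_one_minus_pos_lower_bound assms by blast
  moreover have "2*q*q \<le> 1*q" by (rule mult_right_mono) (use assms in auto)
  then have "2*q^2 \<le> q" by (simp add: power2_eq_square)
  ultimately have "-2*q \<le> ln (1-q)" by linarith
  then have "exp (-2*q) \<le> exp (ln (1-q))" by simp
  also have "\<dots> = 1 - q" using assms by simp
  finally show ?thesis .
qed

lemma CS:
  fixes F :: "'a set set" and P :: "'a set" and w :: "'a set \<Rightarrow> real" and c k :: real
  assumes finF: "finite F" and regs: "\<forall>B\<in>F. B \<subseteq> P \<and> B \<noteq> {}"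
  and hl: "\<forall>R\<subseteq>F. real (card (delaunay_edges (restrict_edges ((\<lambda>x. {B\<in>F. x\<in>B}) ` P) R))) \<le> c * card R"
  and SF: "S \<subseteq> F" and wpos: "\<forall>B\<in>S. w B \<ge> 0" and kpos: "k > 0"
  and dep: "\<forall>x\<in>P. (\<Sum>B\<in>{B\<in>S. x\<in>B}. w B) \<le> k"
  shows "(\<Sum>z\<in>{(A,B). A\<in>S \<and> B\<in>S \<and> A\<noteq>B \<and> A\<inter>B\<noteq>{}}. w (fst z) * w (snd z)) \<le> 4 * exp 1 * c * k * (\<Sum>A\<in>S. w A)"
proof -
  have finS: "finite S" using finF SF finite_subset by blast
  define q where "q C = w C / (2*k)" for C
  have regC: "C \<subseteq> P \<and> C \<noteq> {}" if "C \<in> S" for C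
  proof -
    have "C \<in> F" using SF that by (rule subsetD)
    show ?thesis using regs \<open>C \<in> F\<close> by (rule bspec)
  qed
  have wle: "w C \<le> k" if "C \<in> S" for C
  proof -
    obtain x where x: "x \<in> C" using regC[OF \<open>C \<in> S\<close>] by blast
    have xP: "x \<in> P" using regC[OF \<open>C \<in> S\<close>] x by blast
    have "w C \<le> (\<Sum>B\<in>{B\<in>S. x\<in>B}. w B)"
    proof (rule member_le_sum)
      show "C \<in> {B\<in>S. x\<in>B}" using that x by simp
      show "finite {B\<in>S. x\<in>B}" using finS by simp
      fix B assume "B \<in> {B\<in>S. x\<in>B} - {C}"
      then show "0 \<le> w B" using wpos by simp
    qed
    moreover have "(\<Sum>B\<in>{B\<in>S. x\<in>B}. w B) \<le> k" using dep xP by blast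
    ultimately show ?thesis by linarith
  qed
  have q01: "0 \<le> q C \<and> q C \<le> 1/2" if "C \<in> S" for C
    using wle[OF that] wpos that kpos by (auto simp: q_def divide_simps)
  define M where "M = Pi_pmf S False (\<lambda>C. bernoulli_pmf (q C))"
  define E where "E = (\<lambda>x. {B\<in>F. x\<in>B}) ` P"
  define D where "D f = delaunay_edges (restrict_edges E {C\<in>S. f C})" for f :: "'a set \<Rightarrow> bool"
  define OP where "OP = {(A,B). A\<in>S \<and> B\<in>S \<and> A\<noteq>B \<and> A\<inter>B\<noteq>{}}"
  have finOP: "finite OP"
    by (rule finite_subset[of _ "S \<times> S"]) (auto simp: OP_def finS)
  have finM: "finite (set_pmf M)"
    unfolding M_def by (rule finite_subset[OF set_Pi_pmf_subset']) (auto simp: finS)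
  have integ: "integrable M g" for g :: "_ \<Rightarrow> real"
    by (rule integrable_measure_pmf_finite[OF finM])
  have finD: "finite (D f)" for f
  proof -
    have "D f \<subseteq> Pow F" by (auto simp: D_def delaunay_edges_def restrict_edges_def E_def)
    then show ?thesis using finF finite_subset by (metis finite_Pow_iff)
  qed
  have key1: "real (card {z\<in>OP. {fst z, snd z} \<in> D f}) \<le> 2 * real (card (D f))" for f
  proof -
    have sub: "{z\<in>OP. {fst z, snd z} \<in> D f} \<subseteq> (\<Union>\<pi>\<in>D f. {(A,B). A \<in> \<pi> \<and> B \<in> \<pi> \<and> A \<noteq> B})"
      by (auto simp: OP_def)
    have c2: "card {(A,B). A \<in> \<pi> \<and> B \<in> \<pi> \<and> A \<noteq> B} = 2" if "\<pi> \<in> D f" for \<pi>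
    proof -
      have "card \<pi> = 2" using that by (auto simp: D_def delaunay_edges_def)
      then obtain a b where ab: "\<pi> = {a,b}" "a \<noteq> b" by (meson card_2_iff)
      then have "{(A,B). A \<in> \<pi> \<and> B \<in> \<pi> \<and> A \<noteq> B} = {(a,b),(b,a)}" by auto
      then show ?thesis using ab by auto
    qed
    have "card {z\<in>OP. {fst z, snd z} \<in> D f} \<le> card (\<Union>\<pi>\<in>D f. {(A,B). A \<in> \<pi> \<and> B \<in> \<pi> \<and> A \<noteq> B})"
      by (rule card_mono[OF _ sub]) (use finD c2 in \<open>auto intro: card_ge_0_finite\<close>)
    also have "\<dots> \<le> (\<Sum>\<pi>\<in>D f. card {(A,B). A \<in> \<pi> \<and> B \<in> \<pi> \<and> A \<noteq> B})"
      by (rule card_UN_le[OF finD])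
    also have "\<dots> = 2 * card (D f)" using c2 by simp
    finally show ?thesis by linarith
  qed
  have key2: "real (card (D f)) \<le> c * real (card {C\<in>S. f C})" for f
  proof -
    have sub: "{C\<in>S. f C} \<subseteq> F" using SF by blast
    show ?thesis unfolding D_def E_def using hl sub by blast
  qed
  have pw: "real (card {z\<in>OP. {fst z, snd z} \<in> D f}) \<le> 2 * c * real (card {C\<in>S. f C})" for f
    using key1[of f] key2[of f] by linarith
  have probC: "measure_pmf.prob M {f. f C} = q C" if "C \<in> S" for C
  proof -
    have "measure_pmf.prob M {f. f C} = measure_pmf.prob (map_pmf (\<lambda>f. f C) M) {True}"
      by (simp add: vimage_def)
    also have "map_pmf (\<lambda>f. f C) M = bernoulli_pmf (q C)"
      unfolding M_def using Pi_pmf_component[OF finS, of C False "\<lambda>C. bernoulli_pmf (q C)"] that by simp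
    finally show ?thesis using q01[OF that] by (simp add: measure_pmf_single)
  qed
  have key3: "measure_pmf.expectation M (\<lambda>f. real (card {C\<in>S. f C})) = (\<Sum>C\<in>S. q C)"
  proof -
    have "(\<lambda>f. real (card {C\<in>S. f C})) = (\<lambda>f. \<Sum>C\<in>S. indicator {f. f C} f)"
      by (auto simp: indicator_def finS sum.If_cases Int_def)
    then have "measure_pmf.expectation M (\<lambda>f. real (card {C\<in>S. f C})) = (\<Sum>C\<in>S. measure_pmf.expectation M (indicator {f. f C}))"
      by (simp add: Bochner_Integration.integral_sum integ)
    also have "\<dots> = (\<Sum>C\<in>S. q C)" by (intro sum.cong refl) (simp add: probC)
    finally show ?thesis .
  qed
  have key5: "measure_pmf.expectation M (\<lambda>f. real (card {z\<in>OP. {fst z, snd z} \<in> D f})) = (\<Sum>z\<in>OP. measure_pmf.prob M {f. {fst z, snd z} \<in> D f})"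
  proof -
    have "(\<lambda>f. real (card {z\<in>OP. {fst z, snd z} \<in> D f})) = (\<lambda>f. \<Sum>z\<in>OP. indicator {f. {fst z, snd z} \<in> D f} f)"
      by (auto simp: indicator_def finOP sum.If_cases Int_def)
    then show ?thesis
      by (simp add: Bochner_Integration.integral_sum integ)
  qed
  have key4: "measure_pmf.prob M {f. {fst z, snd z} \<in> D f} \<ge> q (fst z) * q (snd z) / exp 1" if "z \<in> OP" for z
  proof -
    obtain A B where z: "z = (A,B)" "A \<in> S" "B \<in> S" "A \<noteq> B" "A \<inter> B \<noteq> {}" using \<open>z\<in>OP\<close> by (auto simp: OP_def)
    obtain x where x: "x \<in> A" "x \<in> B" using z by blast
    have xP: "x \<in> P" using regC[of A] z x by blast
    define Bs where "Bs C = (if C = A \<or> C = B then {True} else if x \<in> C then {False} else UNIV)" for C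
    have sub: "Pi S Bs \<subseteq> {f. {A, B} \<in> D f}"
    proof
      fix f assume f: "f \<in> Pi S Bs"
      have "f A \<in> Bs A" "f B \<in> Bs B" using Pi_mem[OF f] z(2,3) by auto
      then have fA: "f A" "f B" by (simp_all add: Bs_def)
      have eq: "{C\<in>F. x\<in>C} \<inter> {C\<in>S. f C} = {A,B}"
      proof
        show "{C\<in>F. x\<in>C} \<inter> {C\<in>S. f C} \<subseteq> {A,B}"
        proof
          fix C assume C: "C \<in> {C\<in>F. x\<in>C} \<inter> {C\<in>S. f C}"
          show "C \<in> {A,B}"
          proof (rule ccontr)
            assume "C \<notin> {A,B}"
            moreover have "C \<in> S" using C by blast
            then have "f C \<in> Bs C" by (rule Pi_mem[OF f])
            ultimately have "f C \<in> {False}" using C by (auto simp: Bs_def)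
            then show False using C by auto
          qed
        qed
        show "{A,B} \<subseteq> {C\<in>F. x\<in>C} \<inter> {C\<in>S. f C}" using fA x z SF by auto
      qed
      have "{A,B} \<in> restrict_edges E {C\<in>S. f C}"
        unfolding restrict_edges_def E_def using xP eq by (auto intro!: image_eqI[of _ _ "{C\<in>F. x\<in>C}"])
      then show "f \<in> {f. {A, B} \<in> D f}" using z by (auto simp: D_def delaunay_edges_def)
    qed
    have "measure_pmf.prob M (Pi S Bs) = (\<Prod>C\<in>S. measure_pmf.prob (bernoulli_pmf (q C)) (Bs C))"
      unfolding M_def by (rule measure_Pi_pmf_Pi[OF finS])
    also have "\<dots> = (\<Prod>C\<in>S. (if C = A \<or> C = B then q C else if x \<in> C then 1 - q C else 1))"
    proof (intro prod.cong refl)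
      fix C assume CS: "C \<in> S"
      have q1: "0 \<le> q C" "q C \<le> 1" using q01[OF CS] by linarith+
      show "measure_pmf.prob (bernoulli_pmf (q C)) (Bs C) = (if C = A \<or> C = B then q C else if x \<in> C then 1 - q C else 1)"
      proof (cases "C = A \<or> C = B")
        case True
        then show ?thesis using q1 by (simp add: Bs_def measure_pmf_single)
      next
        case False
        then show ?thesis using q1 by (cases "x \<in> C") (simp_all add: Bs_def measure_pmf_single)
      qed
    qed
    finally have pr: "measure_pmf.prob M (Pi S Bs) = \<dots>" .
    define h where "h C = (if C = A \<or> C = B then q C else if x \<in> C then 1 - q C else 1)" for C
    have S2: "S = insert A (insert B (S - {A,B}))" using z by auto
    have "(\<Prod>C\<in>S. h C) = q A * (q B * (\<Prod>C\<in>S - {A,B}. h C))"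
      apply (subst S2) using finS z by (simp add: h_def)
    moreover have "(\<Prod>C\<in>S - {A,B}. h C) \<ge> (\<Prod>C\<in>S - {A,B}. exp (-2 * (if x \<in> C then q C else 0)))"
      by (intro prod_mono) (use q01 exp_le_one_minus in \<open>auto simp: h_def\<close>)
    moreover have "(\<Prod>C\<in>S - {A,B}. exp (-2 * (if x \<in> C then q C else 0))) = exp (-2 * (\<Sum>C\<in>S - {A,B}. (if x \<in> C then q C else 0)))"
      using finS by (simp add: exp_sum sum_distrib_left)
    moreover have "(\<Sum>C\<in>S - {A,B}. (if x \<in> C then q C else 0)) \<le> 1/2"
    proof -
      have "(\<Sum>C\<in>S - {A,B}. (if x \<in> C then q C else 0)) \<le> (\<Sum>C\<in>S. (if x \<in> C then q C else 0))"
        by (rule sum_mono2) (use finS q01 in auto)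
      also have "\<dots> = (\<Sum>C\<in>{C\<in>S. x\<in>C}. q C)" by (simp add: sum.If_cases finS Int_def)
      also have "\<dots> = (\<Sum>C\<in>{C\<in>S. x\<in>C}. w C) / (2*k)" by (simp add: q_def sum_divide_distrib)
      also have "\<dots> \<le> 1/2" using dep xP kpos by (auto simp: divide_simps)
      finally show ?thesis .
    qed
    ultimately have "(\<Prod>C\<in>S. h C) \<ge> q A * (q B * exp (-1))"
    proof -
      assume a1: "(\<Prod>C\<in>S. h C) = q A * (q B * (\<Prod>C\<in>S - {A,B}. h C))"
        and a2: "(\<Prod>C\<in>S - {A,B}. h C) \<ge> (\<Prod>C\<in>S - {A,B}. exp (-2 * (if x \<in> C then q C else 0)))"
        and a3: "(\<Prod>C\<in>S - {A,B}. exp (-2 * (if x \<in> C then q C else 0))) = exp (-2 * (\<Sum>C\<in>S - {A,B}. (if x \<in> C then q C else 0)))"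
        and a4: "(\<Sum>C\<in>S - {A,B}. (if x \<in> C then q C else 0)) \<le> 1/2"
      have "exp (-1) \<le> exp (-2 * (\<Sum>C\<in>S - {A,B}. (if x \<in> C then q C else 0)))" using a4 by simp
      then have "exp (-1) \<le> (\<Prod>C\<in>S - {A,B}. h C)" using a2 a3 by linarith
      moreover have "0 \<le> q A" "0 \<le> q B" using q01 z by auto
      ultimately show ?thesis unfolding a1 by (simp add: mult_left_mono)
    qed
    then have "measure_pmf.prob M (Pi S Bs) \<ge> q A * q B / exp 1"
      using pr unfolding h_def by (simp add: exp_minus field_simps)
    moreover have "measure_pmf.prob M (Pi S Bs) \<le> measure_pmf.prob M {f. {A, B} \<in> D f}"
      by (rule measure_pmf.finite_measure_mono[OF sub]) simp
    ultimately show ?thesis using z by simp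
  qed
  have "(\<Sum>z\<in>OP. q (fst z) * q (snd z) / exp 1) \<le> (\<Sum>z\<in>OP. measure_pmf.prob M {f. {fst z, snd z} \<in> D f})"
    by (rule sum_mono) (use key4 in auto)
  also have "\<dots> = measure_pmf.expectation M (\<lambda>f. real (card {z\<in>OP. {fst z, snd z} \<in> D f}))"
    using key5 by simp
  also have "\<dots> \<le> measure_pmf.expectation M (\<lambda>f. 2 * c * real (card {C\<in>S. f C}))"
    by (rule integral_mono[OF integ integ]) (use pw in auto)
  also have "\<dots> = 2 * c * (\<Sum>C\<in>S. q C)" using key3 by simp
  finally have main: "(\<Sum>z\<in>OP. q (fst z) * q (snd z) / exp 1) \<le> 2 * c * (\<Sum>C\<in>S. q C)" .
  have l: "(\<Sum>z\<in>OP. q (fst z) * q (snd z) / exp 1) = (\<Sum>z\<in>OP. w (fst z) * w (snd z)) / (4 * k^2 * exp 1)"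
    by (simp add: q_def sum_divide_distrib power2_eq_square field_simps)
  have r: "2 * c * (\<Sum>C\<in>S. q C) = c * (\<Sum>C\<in>S. w C) / k"
    using kpos by (simp add: q_def sum_divide_distrib[symmetric] field_simps)
  have "(\<Sum>z\<in>OP. w (fst z) * w (snd z)) / (4 * k^2 * exp 1) \<le> c * (\<Sum>C\<in>S. w C) / k"
    using main l r by simp
  then have "(\<Sum>z\<in>OP. w (fst z) * w (snd z)) \<le> c * (\<Sum>C\<in>S. w C) / k * (4 * k^2 * exp 1)"
    using kpos by (simp add: divide_le_eq mult.commute)
  also have "\<dots> = 4 * exp 1 * c * k * (\<Sum>A\<in>S. w A)"
    using kpos by (simp add: power2_eq_square field_simps)
  finally show ?thesis unfolding OP_def .
qed

lemma indep_greedy: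
  fixes F :: "'a set set" and P :: "'a set" and w :: "'a set \<Rightarrow> real" and c k :: real
  assumes finF: "finite F" and regs: "\<forall>B\<in>F. B \<subseteq> P \<and> B \<noteq> {}"
  and hl: "\<forall>R\<subseteq>F. real (card (delaunay_edges (restrict_edges ((\<lambda>x. {B\<in>F. x\<in>B}) ` P) R))) \<le> c * card R"
  and wpos: "\<forall>B\<in>F. w B \<ge> 0" and kpos: "k > 0" and cpos: "c \<ge> 0"
  shows "S \<subseteq> F \<Longrightarrow> (\<forall>x\<in>P. (\<Sum>B\<in>{B\<in>S. x\<in>B}. w B) \<le> k) \<Longrightarrow>
    \<exists>I\<subseteq>S. (\<forall>X\<in>I. \<forall>Y\<in>I. X\<noteq>Y \<longrightarrow> X\<inter>Y={}) \<and> (\<Sum>A\<in>S. w A) \<le> (4*exp 1*c+1)*k*card I"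
proof (induction "card S" arbitrary: S rule: less_induct)
  case less
  define K where "K = 4*exp 1*c"
  have K0: "K \<ge> 0" using cpos by (simp add: K_def)
  have finS: "finite S" using finF less.prems(1) finite_subset by blast
  have wS: "\<forall>B\<in>S. w B \<ge> 0" using wpos less.prems(1) by blast
  show ?case
  proof (cases "(\<Sum>A\<in>S. w A) \<le> 0")
    case True
    then show ?thesis by (intro exI[of _ "{}"]) simp
  next
    case False
    then have Wpos: "(\<Sum>A\<in>S. w A) > 0" by simp
    define N where "N A = {B\<in>S. B \<noteq> A \<and> A\<inter>B\<noteq>{}}" for A
    have cs: "(\<Sum>z\<in>{(A,B). A\<in>S \<and> B\<in>S \<and> A\<noteq>B \<and> A\<inter>B\<noteq>{}}. w (fst z) * w (snd z)) \<le> K * k * (\<Sum>A\<in>S. w A)"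
      using CS[OF finF regs hl less.prems(1) wS kpos less.prems(2)] by (simp add: K_def)
    have sig: "{(A,B). A\<in>S \<and> B\<in>S \<and> A\<noteq>B \<and> A\<inter>B\<noteq>{}} = Sigma S N"
      by (auto simp: N_def)
    have "(\<Sum>A\<in>S. \<Sum>B\<in>N A. w A * w B) = (\<Sum>z\<in>Sigma S N. w (fst z) * w (snd z))"
      by (subst sum.Sigma) (use finS in \<open>auto simp: N_def case_prod_beta\<close>)
    then have avg: "(\<Sum>A\<in>S. w A * (\<Sum>B\<in>N A. w B)) \<le> K * k * (\<Sum>A\<in>S. w A)"
      using cs sig by (simp add: sum_distrib_left)
    have "\<exists>A\<in>S. w A > 0 \<and> (\<Sum>B\<in>N A. w B) \<le> K * k"
    proof (rule ccontr)
      assume na: "\<not> ?thesis"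
      have "(\<Sum>A\<in>S. w A * (K * k)) < (\<Sum>A\<in>S. w A * (\<Sum>B\<in>N A. w B))"
      proof (rule sum_strict_mono_ex1[OF finS])
        show "\<forall>x\<in>S. w x * (K * k) \<le> w x * sum w (N x)"
        proof
          fix x assume xS: "x \<in> S"
          show "w x * (K * k) \<le> w x * sum w (N x)"
          proof (cases "w x > 0")
            case True
            then have "K * k < sum w (N x)" using na xS by force
            then show ?thesis using True by simp
          next
            case False
            then have "w x = 0" using wS xS by force
            then show ?thesis by simp
          qed
        qed
        obtain a where a: "a \<in> S" "w a > 0" using Wpos by (meson sum_nonpos not_le)
        then have "K * k < sum w (N a)" using na by force
        then have "w a * (K * k) < w a * sum w (N a)" using a(2) by (rule mult_strict_left_mono)
        then show "\<exists>a\<in>S. w a * (K * k) < w a * sum w (N a)" using a by blast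
      qed
      moreover have "(\<Sum>A\<in>S. w A * (K * k)) = K * k * (\<Sum>A\<in>S. w A)"
        by (simp add: sum_distrib_left sum_distrib_right mult.commute)
      ultimately show False using avg by linarith
    qed
    then obtain A where A: "A \<in> S" "w A > 0" "(\<Sum>B\<in>N A. w B) \<le> K * k" by blast
    have AF: "A \<in> F" using A less.prems(1) by blast
    have regA: "A \<subseteq> P \<and> A \<noteq> {}" using regs AF by (rule bspec)
    obtain x where x: "x \<in> A" using regA by blast
    have xP: "x \<in> P" using regA x by blast
    have wA: "w A \<le> k"
    proof -
      have "w A \<le> (\<Sum>B\<in>{B\<in>S. x\<in>B}. w B)"
      proof (rule member_le_sum)
        show "A \<in> {B\<in>S. x\<in>B}" using A x by simp
        show "finite {B\<in>S. x\<in>B}" using finS by simp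
        fix B assume "B \<in> {B\<in>S. x\<in>B} - {A}"
        then show "0 \<le> w B" using wS by simp
      qed
      moreover have "(\<Sum>B\<in>{B\<in>S. x\<in>B}. w B) \<le> k" using less.prems(2) xP by blast
      ultimately show ?thesis by linarith
    qed
    define S' where "S' = {B\<in>S. A\<inter>B={}}"
    have AS': "A \<notin> S'" using regA by (auto simp: S'_def)
    have S'S: "S' \<subseteq> S" by (auto simp: S'_def)
    have cardlt: "card S' < card S"
      by (rule psubset_card_mono[OF finS]) (use AS' S'S A in blast)
    have dep': "\<forall>x\<in>P. (\<Sum>B\<in>{B\<in>S'. x\<in>B}. w B) \<le> k"
    proof
      fix y assume yP: "y \<in> P"
      have "(\<Sum>B\<in>{B\<in>S'. y\<in>B}. w B) \<le> (\<Sum>B\<in>{B\<in>S. y\<in>B}. w B)"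
        by (rule sum_mono2) (use finS wS S'S in auto)
      then show "(\<Sum>B\<in>{B\<in>S'. y\<in>B}. w B) \<le> k" using less.prems(2) yP by force
    qed
    obtain I' where I': "I' \<subseteq> S'" "\<forall>X\<in>I'. \<forall>Y\<in>I'. X\<noteq>Y \<longrightarrow> X\<inter>Y={}"
      "(\<Sum>A\<in>S'. w A) \<le> (4*exp 1*c+1)*k*card I'"
      using less.hyps[OF cardlt] S'S less.prems(1) dep' by blast
    have Sdec: "S = insert A (N A \<union> S')" using A by (auto simp: N_def S'_def)
    have disj: "A \<notin> N A \<union> S'" "N A \<inter> S' = {}" using AS' by (auto simp: N_def S'_def)
    have finN: "finite (N A)" "finite S'" using finS by (auto simp: N_def S'_def)
    have "(\<Sum>B\<in>S. w B) = w A + (\<Sum>B\<in>N A. w B) + (\<Sum>B\<in>S'. w B)"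
      apply (subst Sdec) using disj finN by (simp add: sum.union_disjoint)
    also have "\<dots> \<le> k + K * k + (K+1)*k*card I'"
      using wA A(3) I'(3) by (simp add: K_def)
    also have "\<dots> = (K+1)*k*card (insert A I')"
    proof -
      have "A \<notin> I'" using AS' I'(1) by blast
      moreover have "finite I'" using I'(1) finN(2) finite_subset by blast
      ultimately show ?thesis by (simp add: algebra_simps)
    qed
    finally have fin: "(\<Sum>B\<in>S. w B) \<le> (K+1)*k*card (insert A I')" .
    have pd: "\<forall>X\<in>insert A I'. \<forall>Y\<in>insert A I'. X\<noteq>Y \<longrightarrow> X\<inter>Y={}"
      using I'(1,2) by (auto simp: S'_def)
    show ?thesis
      by (rule exI[of _ "insert A I'"]) (use fin pd I'(1) S'S A in \<open>auto simp: K_def\<close>)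
  qed
qed

lemma deep_point:
  fixes F :: "'a set set" and P :: "'a set" and w :: "'a set \<Rightarrow> real" and c :: real and p :: nat
  assumes finF: "finite F" and regs: "\<forall>B\<in>F. B \<subseteq> P \<and> B \<noteq> {}"
  and hl: "\<forall>R\<subseteq>F. real (card (delaunay_edges (restrict_edges ((\<lambda>x. {B\<in>F. x\<in>B}) ` P) R))) \<le> c * card R"
  and wpos: "\<forall>B\<in>F. w B \<ge> 0" and cpos: "c \<ge> 0" and p2: "p2_property p F" and p1: "p \<ge> 1"
  and Wpos: "(\<Sum>B\<in>F. w B) > 0"
  shows "\<exists>x\<in>P. (\<Sum>B\<in>{B\<in>F. x\<in>B}. w B) > (\<Sum>B\<in>F. w B) / ((4*exp 1*c+1)*p)"
proof (rule ccontr)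
  assume na: "\<not> ?thesis"
  define k where "k = (\<Sum>B\<in>F. w B) / ((4*exp 1*c+1)*p)"
  have Kp: "(4*exp 1*c+1)*p > 0" using cpos p1 by (simp add: add_nonneg_pos)
  have kpos: "k > 0" using Wpos Kp by (simp add: k_def)
  have dep: "\<forall>x\<in>P. (\<Sum>B\<in>{B\<in>F. x\<in>B}. w B) \<le> k" using na by (auto simp: k_def not_less)
  obtain I where I: "I \<subseteq> F" "\<forall>X\<in>I. \<forall>Y\<in>I. X\<noteq>Y \<longrightarrow> X\<inter>Y={}"
    "(\<Sum>A\<in>F. w A) \<le> (4*exp 1*c+1)*k*card I"
    using indep_greedy[OF finF regs hl wpos kpos cpos, of F] dep by blast
  have c1: "4*exp 1*c+1 > 0" using cpos by (simp add: add_nonneg_pos)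
  have "(4*exp 1*c+1)*k = ((4*exp 1*c+1) * (\<Sum>B\<in>F. w B)) / ((4*exp 1*c+1)*p)" by (simp add: k_def)
  also have "\<dots> = (\<Sum>B\<in>F. w B) / p" using c1 by (rule nonzero_mult_divide_mult_cancel_left[OF less_imp_neq[symmetric]])
  finally have "(4*exp 1*c+1)*k = (\<Sum>B\<in>F. w B) / p" .
  then have "(\<Sum>A\<in>F. w A) \<le> (\<Sum>B\<in>F. w B) / p * card I" using I(3) by simp
  then have "(\<Sum>A\<in>F. w A) * 1 \<le> (\<Sum>B\<in>F. w B) * (card I / p)" by simp
  then have "1 \<le> card I / p" using mult_le_cancel_left_pos[OF Wpos] by blast
  then have "p \<le> card I" using p1 by (simp add: divide_simps)
  then obtain G where G: "G \<subseteq> I" "card G = p" by (meson obtain_subset_with_card_n)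
  then have "G \<subseteq> F" using I(1) by blast
  then obtain X Y where "X \<in> G" "Y \<in> G" "X \<noteq> Y" "X \<inter> Y \<noteq> {}"
    using p2 G(2) unfolding p2_property_def by blast
  then show False using I(2) G(1) by blast
qed

definition cnt :: "'x list \<Rightarrow> 'x set \<Rightarrow> nat" where
  "cnt xs B = length (filter (\<lambda>x. x \<in> B) xs)"

lemma cnt_snoc: "cnt (xs @ [x]) B = cnt xs B + (if x \<in> B then 1 else 0)"
  by (simp add: cnt_def)

lemma mwu:
  fixes F :: "'a set set" and P :: "'a set" and c :: real and p :: nat
  assumes finF: "finite F" and regs: "\<forall>B\<in>F. B \<subseteq> P \<and> B \<noteq> {}"
  and hl: "\<forall>R\<subseteq>F. real (card (delaunay_edges (restrict_edges ((\<lambda>x. {B\<in>F. x\<in>B}) ` P) R))) \<le> c * card R"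
  and cpos: "c \<ge> 0" and p2: "p2_property p F" and p1: "p \<ge> 1" and Fne: "F \<noteq> {}"
  shows "\<exists>xs. length xs = t \<and> set xs \<subseteq> P \<and>
     (\<Sum>B\<in>F. (1/2::real)^(cnt xs B)) \<le> card F * (1 - 1/(2*((4*exp 1*c+1)*p)))^t"
proof (induction t)
  case 0
  show ?case by (intro exI[of _ "[]"]) (simp add: cnt_def)
next
  case (Suc t)
  define Kp where "Kp = (4*exp 1*c+1)*p"
  have Kp1: "Kp \<ge> 1"
  proof -
    have "4*exp 1*c+1 \<ge> 1" using cpos by simp
    moreover have "real p \<ge> 1" using p1 by simp
    ultimately show ?thesis unfolding Kp_def by (metis mult_mono' mult_1 zero_le_one)
  qed
  obtain xs where xs: "length xs = t" "set xs \<subseteq> P"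
    "(\<Sum>B\<in>F. (1/2::real)^(cnt xs B)) \<le> card F * (1 - 1/(2*Kp))^t"
    using Suc.IH unfolding Kp_def by blast
  define w where "w B = (1/2::real)^(cnt xs B)" for B
  have wpos: "\<forall>B\<in>F. w B \<ge> 0" by (simp add: w_def)
  have Wpos: "(\<Sum>B\<in>F. w B) > 0"
    using Fne finF by (intro sum_pos) (auto simp: w_def)
  obtain x where x: "x \<in> P" "(\<Sum>B\<in>{B\<in>F. x\<in>B}. w B) > (\<Sum>B\<in>F. w B) / Kp"
    using deep_point[OF finF regs hl wpos cpos p2 p1 Wpos] unfolding Kp_def by blast
  have eq: "(\<Sum>B\<in>F. (1/2::real)^(cnt (xs@[x]) B)) = (\<Sum>B\<in>F. w B) - (\<Sum>B\<in>{B\<in>F. x\<in>B}. w B) / 2"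
  proof -
    have "(\<Sum>B\<in>F. (1/2::real)^(cnt (xs@[x]) B)) = (\<Sum>B\<in>F. w B - (if x \<in> B then w B / 2 else 0))"
      by (intro sum.cong refl) (auto simp: cnt_snoc w_def)
    also have "\<dots> = (\<Sum>B\<in>F. w B) - (\<Sum>B\<in>F. (if x \<in> B then w B / 2 else 0))"
      by (simp add: sum_subtractf)
    also have "(\<Sum>B\<in>F. (if x \<in> B then w B / 2 else 0)) = (\<Sum>B\<in>{B\<in>F. x\<in>B}. w B) / 2"
      using finF by (simp add: sum.If_cases Int_def sum_divide_distrib)
    finally show ?thesis .
  qed
  have "(\<Sum>B\<in>{B\<in>F. x\<in>B}. w B) / 2 \<ge> (\<Sum>B\<in>F. w B) / (2*Kp)"
    using x(2) by (simp add: field_simps)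
  then have "(\<Sum>B\<in>F. (1/2::real)^(cnt (xs@[x]) B)) \<le> (\<Sum>B\<in>F. w B) * (1 - 1/(2*Kp))"
    using eq by (simp add: algebra_simps)
  also have "\<dots> \<le> card F * (1 - 1/(2*Kp))^t * (1 - 1/(2*Kp))"
    by (rule mult_right_mono) (use xs(3) Kp1 in \<open>auto simp: w_def field_simps\<close>)
  also have "\<dots> = card F * (1 - 1/(2*Kp))^(Suc t)" by simp
  finally show ?case
    by (intro exI[of _ "xs@[x]"]) (use xs x in \<open>auto simp: Kp_def\<close>)
qed


lemma frac_cover:
  fixes F :: "'a set set" and P :: "'a set" and c :: real and p :: nat
  assumes finF: "finite F" and regs: "\<forall>B\<in>F. B \<subseteq> P \<and> B \<noteq> {}"
  and hl: "\<forall>R\<subseteq>F. real (card (delaunay_edges (restrict_edges ((\<lambda>x. {B\<in>F. x\<in>B}) ` P) R))) \<le> c * card R"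
  and cpos: "c \<ge> 0" and p2: "p2_property p F" and p1: "p \<ge> 1" and Fne: "F \<noteq> {}"
  shows "\<exists>xs. xs \<noteq> [] \<and> set xs \<subseteq> P \<and> (\<forall>B\<in>F. real (length xs) \<le> real (cnt xs B) * (4*((4*exp 1*c+1)*p)))"
proof -
  define Kp where "Kp = (4*exp 1*c+1)*p"
  have Kp1: "Kp \<ge> 1"
  proof -
    have "4*exp 1*c+1 \<ge> 1" using cpos by simp
    moreover have "real p \<ge> 1" using p1 by simp
    ultimately show ?thesis unfolding Kp_def by (metis mult_mono' mult_1 zero_le_one)
  qed
  define n where "n = real (card F)"
  have n1: "n \<ge> 1" using Fne finF by (simp add: n_def Suc_leI card_gt_0_iff)
  define \<beta> where "\<beta> = 1/(2*Kp)"
  have b0: "0 < \<beta>" "\<beta> \<le> 1/2" using Kp1 by (auto simp: \<beta>_def field_simps)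
  define t where "t = nat \<lceil>4*Kp*ln n\<rceil> + 1"
  have tge: "real t \<ge> 4*Kp*ln n" unfolding t_def by linarith
  have t1: "t \<ge> 1" by (simp add: t_def)
  obtain xs where xs: "length xs = t" "set xs \<subseteq> P"
    "(\<Sum>B\<in>F. (1/2::real)^(cnt xs B)) \<le> n * (1 - \<beta>)^t"
    using mwu[OF finF regs hl cpos p2 p1 Fne, of t] unfolding Kp_def n_def \<beta>_def by blast
  have "real t \<le> real (cnt xs B) * (4*Kp)" if BF: "B \<in> F" for B
  proof -
    define h where "h = cnt xs B"
    have "(1/2::real)^h \<le> (\<Sum>B\<in>F. (1/2::real)^(cnt xs B))"
      unfolding h_def by (rule member_le_sum) (use BF finF in auto)
    also have "\<dots> \<le> n * (1 - \<beta>)^t" by (rule xs(3))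
    finally have ineq: "(1/2::real)^h \<le> n * (1 - \<beta>)^t" .
    have "ln ((1/2::real)^h) \<le> ln (n * (1 - \<beta>)^t)"
      using ineq b0 n1 by (subst ln_le_cancel_iff) auto
    moreover have "ln ((1/2::real)^h) = - (h * ln 2)" by (simp add: ln_realpow ln_div)
    moreover have "ln (n * (1 - \<beta>)^t) = ln n + t * ln (1 - \<beta>)"
      using b0 n1 by (simp add: ln_mult ln_realpow)
    moreover have "ln (1 - \<beta>) \<le> - \<beta>" using ln_le_minus_one[of "1-\<beta>"] b0 by simp
    ultimately have "- (h * ln 2) \<le> ln n - t * \<beta>"
      using mult_left_mono[of "ln (1 - \<beta>)" "- \<beta>" "real t"] by simp
    moreover have "t * \<beta> \<ge> 2 * ln n"
    proof -
      have "t * \<beta> \<ge> (4*Kp*ln n) * \<beta>" using tge b0 by (simp add: mult_right_mono)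
      also have "(4*Kp*ln n) * \<beta> = 2 * ln n" using Kp1 by (simp add: \<beta>_def field_simps)
      finally show ?thesis .
    qed
    ultimately have "h * ln 2 \<ge> t * \<beta> / 2" by linarith
    moreover have "h * ln 2 \<le> h" using ln_2_less_1 by (simp add: mult_left_le)
    ultimately have "real h \<ge> t * \<beta> / 2" by linarith
    then show ?thesis unfolding h_def using Kp1 by (simp add: \<beta>_def field_simps)
  qed
  then show ?thesis
    by (intro exI[of _ xs]) (use xs t1 in \<open>auto simp: Kp_def\<close>)
qed

definition shatters :: "'a set set \<Rightarrow> 'a set \<Rightarrow> bool" where
  "shatters \<A> Y \<longleftrightarrow> (\<lambda>A. A \<inter> Y) ` \<A> = Pow Y"

lemma pajor:
  assumes "finite U" shows "\<A> \<subseteq> Pow U \<Longrightarrow> card \<A> \<le> card {Y. Y \<subseteq> U \<and> shatters \<A> Y}"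
  using assms
proof (induction U arbitrary: \<A> rule: finite_induct)
  case empty
  then have "\<A> = {} \<or> \<A> = {{}}" by auto
  then show ?case
  proof
    assume "\<A> = {}" then show ?thesis by simp
  next
    assume A: "\<A> = {{}}"
    have "{Y. Y \<subseteq> {} \<and> shatters \<A> Y} = {{}}" by (auto simp: A shatters_def)
    then show ?thesis using A by simp
  qed
next
  case (insert a U)
  define A0 where "A0 = (\<lambda>A. A - {a}) ` \<A>"
  define A1 where "A1 = {A. A \<in> \<A> \<and> a \<notin> A \<and> insert a A \<in> \<A>}"
  define An where "An = {A\<in>\<A>. a \<notin> A}"
  define Ay where "Ay = {A\<in>\<A>. a \<in> A}"
  have finA: "finite \<A>" using insert.prems insert.hyps(1) by (meson finite_Pow_iff finite_insert finite_subset)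
  have A0U: "A0 \<subseteq> Pow U" using insert.prems by (auto simp: A0_def)
  have A1U: "A1 \<subseteq> Pow U" using insert.prems by (auto simp: A1_def)
  have A0eq: "A0 = An \<union> (\<lambda>A. A - {a}) ` Ay"
    by (auto simp: A0_def An_def Ay_def image_iff)
  have A1eq: "A1 = An \<inter> (\<lambda>A. A - {a}) ` Ay"
  proof
    show "A1 \<subseteq> An \<inter> (\<lambda>A. A - {a}) ` Ay"
      by (auto simp: A1_def An_def Ay_def image_iff intro!: bexI[of _ "insert a _"])
    show "An \<inter> (\<lambda>A. A - {a}) ` Ay \<subseteq> A1"
    proof
      fix X assume "X \<in> An \<inter> (\<lambda>A. A - {a}) ` Ay"
      then obtain A where "X \<in> \<A>" "a \<notin> X" "A \<in> \<A>" "a \<in> A" "X = A - {a}" by (auto simp: An_def Ay_def)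
      moreover then have "insert a X = A" by auto
      ultimately show "X \<in> A1" by (auto simp: A1_def)
    qed
  qed
  have injy: "inj_on (\<lambda>A. A - {a}) Ay"
  proof (rule inj_onI)
    fix x y assume "x \<in> Ay" "y \<in> Ay" "x - {a} = y - {a}"
    then have "a \<in> x" "a \<in> y" "insert a (x - {a}) = insert a (y - {a})" by (auto simp: Ay_def)
    then show "x = y" by (metis insert_Diff)
  qed
  have finAn: "finite An" "finite Ay" using finA by (auto simp: An_def Ay_def)
  have cA: "card \<A> = card An + card Ay"
  proof -
    have "\<A> = An \<union> Ay" "An \<inter> Ay = {}" by (auto simp: An_def Ay_def)
    then show ?thesis using finAn card_Un_disjoint by metis
  qed
  have c01: "card A0 + card A1 = card \<A>"
  proof -
    have "card An + card ((\<lambda>A. A - {a}) ` Ay) = card (An \<union> (\<lambda>A. A - {a}) ` Ay) + card (An \<inter> (\<lambda>A. A - {a}) ` Ay)"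
      by (rule card_Un_Int) (use finAn in auto)
    moreover have "card ((\<lambda>A. A - {a}) ` Ay) = card Ay" using injy by (rule card_image)
    ultimately show ?thesis using cA A0eq A1eq by simp
  qed
  define Sh where "Sh X V = {Y. Y \<subseteq> V \<and> shatters X Y}" for X :: "'a set set" and V
  have sh0: "Sh A0 U \<subseteq> Sh \<A> (insert a U)"
  proof
    fix Y assume Y: "Y \<in> Sh A0 U"
    then have YU: "Y \<subseteq> U" and sY: "(\<lambda>A. A \<inter> Y) ` A0 = Pow Y" by (auto simp: Sh_def shatters_def)
    have "(\<lambda>A. A \<inter> Y) ` A0 = (\<lambda>A. A \<inter> Y) ` \<A>"
      unfolding A0_def image_image using YU insert.hyps(2) by (intro image_cong refl) auto
    then show "Y \<in> Sh \<A> (insert a U)" using sY YU by (auto simp: Sh_def shatters_def)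
  qed
  have sh1: "insert a ` Sh A1 U \<subseteq> Sh \<A> (insert a U)"
  proof
    fix Y' assume "Y' \<in> insert a ` Sh A1 U"
    then obtain Y where Y: "Y' = insert a Y" "Y \<subseteq> U" "(\<lambda>A. A \<inter> Y) ` A1 = Pow Y"
      by (auto simp: Sh_def shatters_def)
    have aY: "a \<notin> Y" using Y(2) insert.hyps(2) by blast
    have "(\<lambda>A. A \<inter> insert a Y) ` \<A> = Pow (insert a Y)"
    proof
      show "(\<lambda>A. A \<inter> insert a Y) ` \<A> \<subseteq> Pow (insert a Y)" by auto
      show "Pow (insert a Y) \<subseteq> (\<lambda>A. A \<inter> insert a Y) ` \<A>"
      proof
        fix Z assume Z: "Z \<in> Pow (insert a Y)"
        then have "Z - {a} \<in> Pow Y" by auto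
        then obtain A where A: "A \<in> A1" "A \<inter> Y = Z - {a}" using Y(3) by (metis imageE)
        have A': "A \<in> \<A>" "a \<notin> A" "insert a A \<in> \<A>" using A(1) by (auto simp: A1_def)
        show "Z \<in> (\<lambda>A. A \<inter> insert a Y) ` \<A>"
        proof (cases "a \<in> Z")
          case True
          have "insert a A \<inter> insert a Y = Z" using A(2) True Z by auto
          then show ?thesis using A'(3) by (metis image_eqI)
        next
          case False
          have "A \<inter> insert a Y = Z" using A(2) False A'(2) by auto
          then show ?thesis using A'(1) by (metis image_eqI)
        qed
      qed
    qed
    then show "Y' \<in> Sh \<A> (insert a U)" using Y(1,2) by (auto simp: Sh_def shatters_def)
  qed
  have disj: "Sh A0 U \<inter> insert a ` Sh A1 U = {}" using insert.hyps(2) by (auto simp: Sh_def)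
  have finSh: "finite (Sh X V)" if "finite V" for X V
    using that by (rule finite_subset[rotated, OF finite_Pow_iff[THEN iffD2]]) (auto simp: Sh_def)
  have "card \<A> = card A0 + card A1" using c01 by simp
  also have "\<dots> \<le> card (Sh A0 U) + card (Sh A1 U)"
    using insert.IH[OF A0U] insert.IH[OF A1U] by (simp add: Sh_def)
  also have "card (Sh A1 U) = card (insert a ` Sh A1 U)"
    by (rule card_image[symmetric]) (use insert.hyps(2) in \<open>auto simp: Sh_def inj_on_def\<close>)
  also have "card (Sh A0 U) + card (insert a ` Sh A1 U) = card (Sh A0 U \<union> insert a ` Sh A1 U)"
    by (rule card_Un_disjoint[symmetric]) (use finSh insert.hyps(1) disj in auto)
  also have "\<dots> \<le> card (Sh \<A> (insert a U))"
    by (rule card_mono) (use finSh insert.hyps(1) sh0 sh1 in auto)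
  finally show ?case by (simp add: Sh_def)
qed

lemma small_sets_bound:
  assumes "finite U" shows "card {Y. Y \<subseteq> U \<and> card Y \<le> t} \<le> (card U + 1)^t"
proof -
  define L where "L = {xs. set xs \<subseteq> insert None (Some ` U) \<and> length xs = t}"
  define f where "f xs = {u. Some u \<in> set xs}" for xs :: "'a option list"
  have "{Y. Y \<subseteq> U \<and> card Y \<le> t} \<subseteq> f ` L"
  proof
    fix Y assume Y: "Y \<in> {Y. Y \<subseteq> U \<and> card Y \<le> t}"
    then have fY: "finite Y" using assms finite_subset by blast
    obtain ys where ys: "set ys = Y" "distinct ys" using finite_distinct_list[OF fY] by blast
    have ly: "length ys \<le> t" using Y ys distinct_card by fastforce
    define xs where "xs = map Some ys @ replicate (t - length ys) None"
    have "xs \<in> L" using ly ys Y by (auto simp: xs_def L_def)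
    moreover have "f xs = Y" using ys by (auto simp: f_def xs_def)
    ultimately show "Y \<in> f ` L" by blast
  qed
  then have "card {Y. Y \<subseteq> U \<and> card Y \<le> t} \<le> card (f ` L)"
    by (rule card_mono[rotated]) (use assms in \<open>auto simp: L_def finite_lists_length_eq\<close>)
  also have "\<dots> \<le> card L" by (rule card_image_le) (use assms in \<open>auto simp: L_def finite_lists_length_eq\<close>)
  also have "card L = (card (insert None (Some ` U)))^t"
    unfolding L_def by (rule card_lists_length_eq) (use assms in auto)
  also have "card (insert None (Some ` U)) = card U + 1"
    using assms by (simp add: card_image)
  finally show ?thesis .
qed

lemma two_choose2: "2 * (q choose 2) = q * (q - 1)"
proof -
  have "even (q * (q - 1))" by (cases q) auto
  then show ?thesis by (simp add: choose_two)
qed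

lemma no_big_shatter:
  fixes F :: "'a set set" and P :: "'a set" and c :: real and zs :: "'a list"
  assumes hl: "\<forall>R\<subseteq>F. real (card (delaunay_edges (restrict_edges ((\<lambda>x. {B\<in>F. x\<in>B}) ` P) R))) \<le> c * card R"
  and cpos: "c \<ge> 0" and zsP: "set zs \<subseteq> P" and finF: "finite F"
  and YU: "Y \<subseteq> {..<length zs}"
  and sh: "shatters ((\<lambda>B. {j. j < length zs \<and> zs!j \<in> B}) ` F) Y"
  shows "card Y < (nat \<lceil>2*c\<rceil> + 3) choose 2"
proof (rule ccontr)
  define q where "q = nat \<lceil>2*c\<rceil> + 3"
  define tr where "tr B = {j. j < length zs \<and> zs!j \<in> B}" for B
  assume "\<not> card Y < (nat \<lceil>2*c\<rceil> + 3) choose 2"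
  then have cY: "q choose 2 \<le> card Y" by (simp add: q_def)
  obtain Y' where Y': "Y' \<subseteq> Y" "card Y' = q choose 2" "finite Y'"
    by (rule obtain_subset_with_card_n[OF cY])
  have sh': "\<forall>Z\<in>Pow Y'. \<exists>B\<in>F. tr B \<inter> Y' = Z"
  proof
    fix Z assume Z: "Z \<in> Pow Y'"
    then have "Z \<in> Pow Y" using Y'(1) by blast
    then have "Z \<in> (\<lambda>A. A \<inter> Y) ` ((\<lambda>B. {j. j < length zs \<and> zs!j \<in> B}) ` F)" using sh unfolding shatters_def by simp
    then obtain B where B: "B \<in> F" "tr B \<inter> Y = Z" unfolding tr_def image_image by blast
    have "tr B \<inter> Y' = Z" using B(2) Z Y'(1) by blast
    then show "\<exists>B\<in>F. tr B \<inter> Y' = Z" using B(1) by blast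
  qed
  define Pairs where "Pairs = {\<pi>. \<pi> \<subseteq> {..<q} \<and> card \<pi> = 2}"
  have cP: "card Pairs = q choose 2" unfolding Pairs_def using n_subsets[of "{..<q}" 2] by simp
  have finP: "finite Pairs" unfolding Pairs_def by (rule finite_subset[of _ "Pow {..<q}"]) auto
  have "card Pairs = card Y'" using cP Y'(2) by simp
  then obtain g where g: "bij_betw g Pairs Y'"
    using finite_same_card_bij[OF finP Y'(3)] by blast
  define J where "J a = g ` {\<pi>\<in>Pairs. a \<in> \<pi>}" for a
  have "\<forall>a\<in>{..<q}. \<exists>B. B \<in> F \<and> tr B \<inter> Y' = J a"
  proof
    fix a assume "a \<in> {..<q}"
    have "J a \<in> Pow Y'" using g unfolding J_def bij_betw_def by auto
    then show "\<exists>B. B \<in> F \<and> tr B \<inter> Y' = J a" using sh' by blast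
  qed
  from bchoice[OF this] obtain Bf where Bf: "\<forall>a\<in>{..<q}. Bf a \<in> F \<and> tr (Bf a) \<inter> Y' = J a" by blast
  have ginj: "inj_on g Pairs" using g by (simp add: bij_betw_def)
  have gY: "g \<pi> \<in> Y'" if "\<pi> \<in> Pairs" for \<pi> using g that by (auto simp: bij_betw_def)
  have key: "zs!(g \<pi>) \<in> Bf a \<longleftrightarrow> a \<in> \<pi>" if \<pi>: "\<pi> \<in> Pairs" and a: "a < q" for \<pi> a
  proof -
    have glt: "g \<pi> < length zs" using gY[OF \<pi>] Y'(1) YU by auto
    have "zs!(g \<pi>) \<in> Bf a \<longleftrightarrow> g \<pi> \<in> tr (Bf a) \<inter> Y'" using glt gY[OF \<pi>] by (auto simp: tr_def)
    also have "\<dots> \<longleftrightarrow> g \<pi> \<in> J a" using Bf a by auto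
    also have "\<dots> \<longleftrightarrow> a \<in> \<pi>"
    proof
      assume "g \<pi> \<in> J a"
      then obtain \<pi>' where "\<pi>' \<in> Pairs" "a \<in> \<pi>'" "g \<pi> = g \<pi>'" by (auto simp: J_def)
      then show "a \<in> \<pi>" using ginj \<pi> by (metis inj_onD)
    next
      assume "a \<in> \<pi>" then show "g \<pi> \<in> J a" using \<pi> by (auto simp: J_def)
    qed
    finally show ?thesis .
  qed
  have q3: "q \<ge> 3" by (simp add: q_def)
  have Bfinj: "inj_on Bf {..<q}"
  proof (rule inj_onI)
    fix a a' assume a: "a \<in> {..<q}" and a': "a' \<in> {..<q}" and eq: "Bf a = Bf a'"
    show "a = a'"
    proof (rule ccontr)
      assume ne: "a \<noteq> a'"
      have "\<exists>a''\<in>{0,1,2::nat}. a'' \<noteq> a \<and> a'' \<noteq> a'" by auto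
      then obtain a'' where a0: "a'' \<in> {0,1,2::nat}" "a'' \<noteq> a" "a'' \<noteq> a'" by blast
      then have a'': "a'' < q" "a'' \<noteq> a" "a'' \<noteq> a'" using q3 by auto
      define \<pi> where "\<pi> = {a, a''}"
      have \<pi>P: "\<pi> \<in> Pairs" using a a'' by (auto simp: Pairs_def \<pi>_def)
      have "zs!(g \<pi>) \<in> Bf a" using key[OF \<pi>P] a by (auto simp: \<pi>_def)
      then have "zs!(g \<pi>) \<in> Bf a'" using eq by simp
      then have "a' \<in> \<pi>" using key[OF \<pi>P] a' by auto
      then show False using ne a'' by (auto simp: \<pi>_def)
    qed
  qed
  define S where "S = Bf ` {..<q}"
  have SF: "S \<subseteq> F" using Bf by (auto simp: S_def)
  have cS: "card S = q" using Bfinj by (simp add: S_def card_image)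
  define E where "E = (\<lambda>x. {B\<in>F. x\<in>B}) ` P"
  define D where "D = delaunay_edges (restrict_edges E S)"
  have inD: "Bf ` \<pi> \<in> D" if \<pi>: "\<pi> \<in> Pairs" for \<pi>
  proof -
    define x where "x = zs!(g \<pi>)"
    have glt: "g \<pi> < length zs" using gY[OF \<pi>] Y'(1) YU by auto
    have xP: "x \<in> P" using zsP glt by (auto simp: x_def)
    have \<pi>q: "\<pi> \<subseteq> {..<q}" using \<pi> by (auto simp: Pairs_def)
    have eq: "{B\<in>F. x\<in>B} \<inter> S = Bf ` \<pi>"
    proof
      show "{B\<in>F. x\<in>B} \<inter> S \<subseteq> Bf ` \<pi>"
        using key[OF \<pi>] by (auto simp: S_def x_def)
      show "Bf ` \<pi> \<subseteq> {B\<in>F. x\<in>B} \<inter> S"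
        using key[OF \<pi>] \<pi>q Bf by (auto simp: S_def x_def)
    qed
    have "card (Bf ` \<pi>) = 2"
      using \<pi> \<pi>q inj_on_subset[OF Bfinj \<pi>q] by (simp add: Pairs_def card_image)
    moreover have "Bf ` \<pi> \<in> restrict_edges E S"
      unfolding restrict_edges_def E_def using xP eq by (auto intro!: image_eqI[of _ _ "{B\<in>F. x\<in>B}"])
    ultimately show ?thesis by (simp add: D_def delaunay_edges_def)
  qed
  have finD: "finite D"
  proof -
    have "D \<subseteq> Pow S" by (auto simp: D_def delaunay_edges_def restrict_edges_def)
    moreover have "finite S" by (simp add: S_def)
    ultimately show ?thesis by (meson finite_Pow_iff finite_subset)
  qed
  have "card ((image Bf) ` Pairs) = card Pairs"
    by (rule card_image) (rule inj_on_subset[OF inj_on_image_Pow[OF Bfinj]], auto simp: Pairs_def)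
  moreover have "card ((image Bf) ` Pairs) \<le> card D"
    by (rule card_mono[OF finD]) (use inD in auto)
  ultimately have "q choose 2 \<le> card D" using cP by simp
  moreover have "real (card D) \<le> c * q" using hl SF cS unfolding D_def E_def by auto
  ultimately have le: "real (q choose 2) \<le> c * q" by linarith
  have "real (2 * (q choose 2)) = real q * (real q - 1)" using two_choose2[of q] q3 by (simp add: of_nat_diff)
  moreover have "real q - 1 \<ge> 2*c + 2" using cpos unfolding q_def by linarith
  ultimately have "2 * real (q choose 2) \<ge> real q * (2*c+2)" using q3 by (simp add: mult_left_mono)
  then have "real (q choose 2) \<ge> c * q + q" by (simp add: algebra_simps)
  then show False using le q3 by linarith
qed

lemma trace_bound:
  fixes F :: "'a set set" and P :: "'a set" and c :: real and zs :: "'a list"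
  assumes hl: "\<forall>R\<subseteq>F. real (card (delaunay_edges (restrict_edges ((\<lambda>x. {B\<in>F. x\<in>B}) ` P) R))) \<le> c * card R"
  and cpos: "c \<ge> 0" and zsP: "set zs \<subseteq> P" and finF: "finite F"
  shows "card ((\<lambda>B. {j. j < length zs \<and> zs!j \<in> B}) ` F) \<le> (length zs + 1) ^ ((nat \<lceil>2*c\<rceil> + 3) choose 2)"
proof -
  define \<A> where "\<A> = (\<lambda>B. {j. j < length zs \<and> zs!j \<in> B}) ` F"
  define t where "t = (nat \<lceil>2*c\<rceil> + 3) choose 2"
  have "card \<A> \<le> card {Y. Y \<subseteq> {..<length zs} \<and> shatters \<A> Y}"
    by (rule pajor) (auto simp: \<A>_def)
  also have "\<dots> \<le> card {Y. Y \<subseteq> {..<length zs} \<and> card Y \<le> t}"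
  proof (rule card_mono)
    show "finite {Y. Y \<subseteq> {..<length zs} \<and> card Y \<le> t}" by (rule finite_subset[of _ "Pow {..<length zs}"]) auto
    show "{Y. Y \<subseteq> {..<length zs} \<and> shatters \<A> Y} \<subseteq> {Y. Y \<subseteq> {..<length zs} \<and> card Y \<le> t}"
      using no_big_shatter[OF hl cpos zsP finF] unfolding \<A>_def t_def by (auto simp: less_imp_le)
  qed
  also have "\<dots> \<le> (card {..<length zs} + 1)^t" by (rule small_sets_bound) simp
  finally show ?thesis by (simp add: \<A>_def t_def)
qed

definition Ls :: "nat \<Rightarrow> nat \<Rightarrow> nat list set" where
  "Ls T s = {N. set N \<subseteq> {..<T} \<and> length N = s}"

lemma finite_Ls: "finite (Ls T s)"
  unfolding Ls_def by (rule finite_lists_length_eq) simp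

lemma card_Ls: "card (Ls T s) = T^s"
  unfolding Ls_def using card_lists_length_eq[of "{..<T}" s] by simp

lemma Ls_Suc: "Ls T (Suc s) = (\<lambda>(n,N). n#N) ` ({..<T} \<times> Ls T s)"
  by (auto simp: Ls_def length_Suc_conv image_iff)

lemma sum_Ls_Suc: "(\<Sum>N\<in>Ls T (Suc s). f N) = (\<Sum>n<T. \<Sum>N\<in>Ls T s. f (n#N))"
proof -
  have inj: "inj_on (\<lambda>(n,N). n#N) ({..<T} \<times> Ls T s)" by (auto simp: inj_on_def)
  have "(\<Sum>N\<in>Ls T (Suc s). f N) = (\<Sum>z\<in>{..<T} \<times> Ls T s. f ((\<lambda>(n,N). n#N) z))"
    unfolding Ls_Suc by (subst sum.reindex[OF inj]) (simp add: o_def)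
  also have "\<dots> = (\<Sum>(n,N)\<in>{..<T} \<times> Ls T s. f (n#N))" by (intro sum.cong refl) auto
  also have "\<dots> = (\<Sum>n<T. \<Sum>N\<in>Ls T s. f (n#N))" by (rule sum.cartesian_product[symmetric])
  finally show ?thesis .
qed

lemma sum_indicator_card: "(\<Sum>n\<in>A. (if n \<in> r then 1 else 0::real)) = real (card (A \<inter> r))" if "finite A"
  using that by (simp add: sum.If_cases)

lemma cheb_sum:
  fixes T :: nat and r :: "nat set" and q :: real
  assumes T0: "T > 0" and q_def: "q = real (card ({..<T} \<inter> r)) / T"
  shows "(\<Sum>N\<in>Ls T s. (real (cnt N r) - s*q)^2) = s*q*(1-q)*T^s"
proof (induction s)
  case 0
  have "Ls T 0 = {[]}" by (auto simp: Ls_def)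
  then show ?case by (simp add: cnt_def)
next
  case (Suc s)
  define u where "u n = (if n \<in> r then 1 else 0) - q" for n
  define v where "v N = real (cnt N r) - s*q" for N
  have su: "(\<Sum>n<T. u n) = 0"
  proof -
    have "(\<Sum>n<T. u n) = real (card ({..<T} \<inter> r)) - T * q"
      by (simp add: u_def sum_subtractf sum_indicator_card)
    then show ?thesis using T0 by (simp add: q_def)
  qed
  have su2: "(\<Sum>n<T. (u n)^2) = T*q*(1-q)"
  proof -
    have "(u n)^2 = (if n \<in> r then 1 else 0) * (1 - 2*q) + q^2" for n
      by (simp add: u_def power2_eq_square algebra_simps)
    then have "(\<Sum>n<T. (u n)^2) = (\<Sum>n<T. (if n \<in> r then 1 else 0) * (1 - 2*q)) + T * q^2"
      by (simp add: sum.distrib)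
    also have "(\<Sum>n<T. (if n \<in> r then 1 else 0) * (1 - 2*q)) = real (card ({..<T} \<inter> r)) * (1 - 2*q)"
      by (simp add: sum_distrib_right[symmetric] sum_indicator_card)
    also have "real (card ({..<T} \<inter> r)) = T * q" using T0 by (simp add: q_def)
    finally show ?thesis by (simp add: power2_eq_square algebra_simps)
  qed
  have "(\<Sum>N\<in>Ls T (Suc s). (real (cnt N r) - Suc s*q)^2) = (\<Sum>n<T. \<Sum>N\<in>Ls T s. (u n + v N)^2)"
    unfolding sum_Ls_Suc by (intro sum.cong refl) (simp add: cnt_def u_def v_def algebra_simps)
  also have "\<dots> = (\<Sum>n<T. \<Sum>N\<in>Ls T s. ((u n)^2 + 2 * u n * v N + (v N)^2))"
    by (simp add: power2_eq_square algebra_simps)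
  also have "\<dots> = (\<Sum>n<T. real (T^s) * (u n)^2 + 2 * u n * (\<Sum>N\<in>Ls T s. v N) + (\<Sum>N\<in>Ls T s. (v N)^2))"
  proof (intro sum.cong refl)
    fix n
    have "(\<Sum>N\<in>Ls T s. ((u n)^2 + 2 * u n * v N + (v N)^2)) = (\<Sum>N\<in>Ls T s. (u n)^2) + (\<Sum>N\<in>Ls T s. 2 * u n * v N) + (\<Sum>N\<in>Ls T s. (v N)^2)"
      by (simp add: sum.distrib)
    also have "(\<Sum>N\<in>Ls T s. (u n)^2) = real (T^s) * (u n)^2" by (simp add: card_Ls)
    also have "(\<Sum>N\<in>Ls T s. 2 * u n * v N) = 2 * u n * (\<Sum>N\<in>Ls T s. v N)" by (simp add: sum_distrib_left)
    finally show "(\<Sum>N\<in>Ls T s. ((u n)^2 + 2 * u n * v N + (v N)^2)) = real (T^s) * (u n)^2 + 2 * u n * (\<Sum>N\<in>Ls T s. v N) + (\<Sum>N\<in>Ls T s. (v N)^2)" .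
  qed
  also have "\<dots> = real (T^s) * (\<Sum>n<T. (u n)^2) + 2 * (\<Sum>n<T. u n) * (\<Sum>N\<in>Ls T s. v N) + T * (\<Sum>N\<in>Ls T s. (v N)^2)"
  proof -
    have "(\<Sum>n<T. real (T^s) * (u n)^2 + 2 * u n * (\<Sum>N\<in>Ls T s. v N) + (\<Sum>N\<in>Ls T s. (v N)^2))
      = (\<Sum>n<T. real (T^s) * (u n)^2) + (\<Sum>n<T. 2 * u n * (\<Sum>N\<in>Ls T s. v N)) + (\<Sum>n<T. (\<Sum>N\<in>Ls T s. (v N)^2))"
      by (simp add: sum.distrib)
    also have "(\<Sum>n<T. real (T^s) * (u n)^2) = real (T^s) * (\<Sum>n<T. (u n)^2)" by (simp add: sum_distrib_left)
    also have "(\<Sum>n<T. 2 * u n * (\<Sum>N\<in>Ls T s. v N)) = (\<Sum>n<T. 2 * u n) * (\<Sum>N\<in>Ls T s. v N)"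
      by (rule sum_distrib_right[symmetric])
    also have "(\<Sum>n<T. 2 * u n) = 2 * (\<Sum>n<T. u n)" by (rule sum_distrib_left[symmetric])
    finally show ?thesis by simp
  qed
  also have "\<dots> = real (T^s) * (T*q*(1-q)) + T * (s*q*(1-q)*T^s)"
    using su su2 Suc.IH by (simp add: v_def)
  also have "\<dots> = Suc s * q * (1-q) * T^(Suc s)" by (simp add: algebra_simps)
  finally show ?case .
qed

lemma cheb_count:
  fixes T :: nat and r :: "nat set" and s :: nat
  assumes T0: "T > 0" and big: "real s * real (card ({..<T} \<inter> r)) / T \<ge> 8"
  shows "real (card {N\<in>Ls T s. real (cnt N r) < real s * real (card ({..<T} \<inter> r)) / T / 2}) \<le> real (T^s) / 2"
proof -
  define q where "q = real (card ({..<T} \<inter> r)) / T"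
  define \<mu> where "\<mu> = s * q"
  have mu: "\<mu> \<ge> 8" using big by (simp add: \<mu>_def q_def)
  have q01: "0 \<le> q" "q \<le> 1"
  proof -
    show "0 \<le> q" by (simp add: q_def)
    have "card ({..<T} \<inter> r) \<le> card {..<T}" by (rule card_mono) auto
    then show "q \<le> 1" using T0 by (simp add: q_def)
  qed
  define Bad where "Bad = {N\<in>Ls T s. real (cnt N r) < \<mu> / 2}"
  have finB: "finite Bad" using finite_Ls by (simp add: Bad_def)
  have "real (card Bad) * (\<mu>/2)^2 = (\<Sum>N\<in>Bad. (\<mu>/2)^2)" by simp
  also have "\<dots> \<le> (\<Sum>N\<in>Bad. (real (cnt N r) - \<mu>)^2)"
  proof (rule sum_mono)
    fix N assume "N \<in> Bad"
    then have "real (cnt N r) < \<mu>/2" by (simp add: Bad_def)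
    moreover have "0 \<le> real (cnt N r)" by simp
    ultimately have "\<mu>/2 \<le> \<mu> - real (cnt N r)" "0 \<le> \<mu>/2" using mu by linarith+
    then have "(\<mu>/2)^2 \<le> (\<mu> - real (cnt N r))^2" by (rule power_mono)
    then show "(\<mu>/2)^2 \<le> (real (cnt N r) - \<mu>)^2" by (simp add: power2_commute)
  qed
  also have "\<dots> \<le> (\<Sum>N\<in>Ls T s. (real (cnt N r) - \<mu>)^2)"
    by (rule sum_mono2[OF finite_Ls]) (auto simp: Bad_def)
  also have "\<dots> = s*q*(1-q)*T^s" unfolding \<mu>_def using cheb_sum[OF T0 q_def] by simp
  also have "\<dots> \<le> \<mu> * T^s"
  proof -
    have "s*q*(1-q) \<le> s*q" using q01 by (simp add: mult_left_le)
    then show ?thesis unfolding \<mu>_def by (simp add: mult_right_mono)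
  qed
  finally have ineq: "real (card Bad) * (\<mu>/2)^2 \<le> \<mu> * T^s" .
  define X where "X = real (card Bad) * (\<mu>/4)"
  have e: "real (card Bad) * (\<mu>/2)^2 = X * \<mu>" by (simp add: power2_eq_square X_def)
  have e2: "\<mu> * real (T^s) = real T^s * \<mu>" by simp
  have "X * \<mu> \<le> real T^s * \<mu>" using ineq e e2 by linarith
  then have "X \<le> T^s" using mu by (simp add: mult_le_cancel_right)
  then have "real (card Bad) * (\<mu>/4) \<le> T^s" by (simp add: X_def)
  moreover have "real (card Bad) * 2 \<le> real (card Bad) * (\<mu>/4)" using mu by (intro mult_left_mono) auto
  ultimately have "real (card Bad) \<le> T^s / 2" by simp
  then show ?thesis by (simp add: Bad_def \<mu>_def q_def)
qed

definition sw :: "nat set \<Rightarrow> nat \<Rightarrow> nat list \<times> nat list \<Rightarrow> nat list \<times> nat list" where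
  "sw \<sigma> s z = (map (\<lambda>i. if i\<in>\<sigma> then snd z!i else fst z!i) [0..<s],
                map (\<lambda>i. if i\<in>\<sigma> then fst z!i else snd z!i) [0..<s])"

lemma sw_nth:
  assumes "i < s"
  shows "fst (sw \<sigma> s z) ! i = (if i\<in>\<sigma> then snd z!i else fst z!i)"
        "snd (sw \<sigma> s z) ! i = (if i\<in>\<sigma> then fst z!i else snd z!i)"
  using assms by (simp_all add: sw_def)

lemma sw_LL:
  assumes "z \<in> Ls T s \<times> Ls T s" shows "sw \<sigma> s z \<in> Ls T s \<times> Ls T s"
proof -
  obtain N M where z: "z = (N,M)" "set N \<subseteq> {..<T}" "length N = s" "set M \<subseteq> {..<T}" "length M = s"
    using assms by (auto simp: Ls_def)
  have "N!i < T" "M!i < T" if "i < s" for i using z that nth_mem by (metis lessThan_iff subsetD)+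
  then show ?thesis by (auto simp: sw_def Ls_def z)
qed

lemma sw_sw:
  assumes "z \<in> Ls T s \<times> Ls T s" shows "sw \<sigma> s (sw \<sigma> s z) = z"
proof -
  obtain N M where z: "z = (N,M)" "length N = s" "length M = s"
    using assms by (auto simp: Ls_def)
  have "fst (sw \<sigma> s (sw \<sigma> s z)) = N"
    by (rule nth_equalityI) (auto simp: sw_def z)
  moreover have "snd (sw \<sigma> s (sw \<sigma> s z)) = M"
    by (rule nth_equalityI) (auto simp: sw_def z)
  ultimately show ?thesis using z(1) by (metis prod.collapse)
qed

lemma count_swap:
  assumes Bad: "Bad \<subseteq> Ls T s \<times> Ls T s"
  shows "card {z\<in>Ls T s \<times> Ls T s. sw \<sigma> s z \<in> Bad} = card Bad"
proof -
  have eq: "{z\<in>Ls T s \<times> Ls T s. sw \<sigma> s z \<in> Bad} = sw \<sigma> s ` Bad"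
  proof
    show "{z\<in>Ls T s \<times> Ls T s. sw \<sigma> s z \<in> Bad} \<subseteq> sw \<sigma> s ` Bad"
    proof
      fix z assume z: "z \<in> {z\<in>Ls T s \<times> Ls T s. sw \<sigma> s z \<in> Bad}"
      then have "z = sw \<sigma> s (sw \<sigma> s z)" using sw_sw by (metis (no_types, lifting) mem_Collect_eq)
      then show "z \<in> sw \<sigma> s ` Bad" using z by blast
    qed
    show "sw \<sigma> s ` Bad \<subseteq> {z\<in>Ls T s \<times> Ls T s. sw \<sigma> s z \<in> Bad}"
    proof
      fix y assume "y \<in> sw \<sigma> s ` Bad"
      then obtain z where z: "z \<in> Bad" "y = sw \<sigma> s z" by blast
      then have zL: "z \<in> Ls T s \<times> Ls T s" using Bad by blast
      have "sw \<sigma> s y = z" using sw_sw[OF zL] z by simp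
      then show "y \<in> {z\<in>Ls T s \<times> Ls T s. sw \<sigma> s z \<in> Bad}" using sw_LL[OF zL] z by simp
    qed
  qed
  have "inj_on (sw \<sigma> s) Bad"
  proof (rule inj_onI)
    fix x y assume "x \<in> Bad" "y \<in> Bad" "sw \<sigma> s x = sw \<sigma> s y"
    then show "x = y" using sw_sw[of x T s \<sigma>] sw_sw[of y T s \<sigma>] Bad by (metis subsetD)
  qed
  then show ?thesis unfolding eq by (rule card_image)
qed

lemma card_swap_sum:
  assumes "finite A" "finite B"
  shows "(\<Sum>a\<in>A. card {b\<in>B. R a b}) = (\<Sum>b\<in>B. card {a\<in>A. R a b})"
proof -
  have "(\<Sum>a\<in>A. card {b\<in>B. R a b}) = (\<Sum>a\<in>A. \<Sum>b\<in>B. if R a b then 1 else 0)"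
    using assms by (simp add: sum.If_cases Int_def)
  also have "\<dots> = (\<Sum>b\<in>B. \<Sum>a\<in>A. if R a b then 1 else 0)" by (rule sum.swap)
  also have "\<dots> = (\<Sum>b\<in>B. card {a\<in>A. R a b})"
    using assms by (simp add: sum.If_cases Int_def)
  finally show ?thesis .
qed


lemma card_Sigma_set:
  assumes U: "U \<subseteq> {..<s}"
  shows "card {\<sigma>\<in>Pow {..<s}. \<forall>i\<in>U. i\<in>\<sigma> \<longleftrightarrow> i\<in>t} \<le> 2^(s - card U)"
proof -
  have sub: "{\<sigma>\<in>Pow {..<s}. \<forall>i\<in>U. i\<in>\<sigma> \<longleftrightarrow> i\<in>t} \<subseteq> (\<lambda>\<tau>. \<tau> \<union> (U \<inter> t)) ` Pow ({..<s} - U)"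
  proof
    fix \<sigma> assume \<sigma>: "\<sigma> \<in> {\<sigma>\<in>Pow {..<s}. \<forall>i\<in>U. i\<in>\<sigma> \<longleftrightarrow> i\<in>t}"
    then have "\<sigma> = (\<sigma> - U) \<union> (U \<inter> t)" by auto
    moreover have "\<sigma> - U \<in> Pow ({..<s} - U)" using \<sigma> by auto
    ultimately show "\<sigma> \<in> (\<lambda>\<tau>. \<tau> \<union> (U \<inter> t)) ` Pow ({..<s} - U)" by blast
  qed
  have "card {\<sigma>\<in>Pow {..<s}. \<forall>i\<in>U. i\<in>\<sigma> \<longleftrightarrow> i\<in>t} \<le> card ((\<lambda>\<tau>. \<tau> \<union> (U \<inter> t)) ` Pow ({..<s} - U))"
    by (rule card_mono[OF _ sub]) simp
  also have "\<dots> \<le> card (Pow ({..<s} - U))" by (rule card_image_le) simp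
  also have "\<dots> = 2^(s - card U)"
    using U by (simp add: card_Pow card_Diff_subset finite_subset)
  finally show ?thesis .
qed

lemma per_z:
  fixes xs :: "'a list" and F :: "'a set set" and P :: "'a set" and D :: nat and \<theta> :: real
  assumes T: "T = length xs" and setxs: "set xs \<subseteq> P" and finF: "finite F"
  and trb: "\<forall>zs. set zs \<subseteq> P \<longrightarrow> card ((\<lambda>B. {j. j < length zs \<and> zs!j \<in> B}) ` F) \<le> (length zs + 1)^D"
  and Bad2: "Bad2 = {z \<in> Ls T s \<times> Ls T s. \<exists>B\<in>F. (\<forall>i<s. xs!(fst z!i) \<notin> B) \<and> \<theta> \<le> real (card {i. i<s \<and> xs!(snd z!i) \<in> B})}"
  and zL: "z \<in> Ls T s \<times> Ls T s"
  shows "real (card {\<sigma>\<in>Pow {..<s}. sw \<sigma> s z \<in> Bad2}) \<le> real ((2 * s + 1)^D) * 2^s / 2 powr \<theta>"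
proof -
  obtain N M where z: "z = (N,M)" "set N \<subseteq> {..<T}" "length N = s" "set M \<subseteq> {..<T}" "length M = s"
    using zL by (auto simp: Ls_def)
  define zs where "zs = map (\<lambda>j. xs!j) (N @ M)"
  have lzs: "length zs = 2 * s" using z by (simp add: zs_def)
  have zsP: "set zs \<subseteq> P"
  proof
    fix y assume "y \<in> set zs"
    then obtain j where "j \<in> set (N @ M)" "y = xs!j" by (auto simp: zs_def)
    then have "j < length xs" using z T by auto
    then show "y \<in> P" using setxs \<open>y = xs!j\<close> nth_mem by blast
  qed
  have zsN: "zs!i = xs!(N!i)" if "i < s" for i using that z by (simp add: zs_def nth_append)
  have zsM: "zs!(s+i) = xs!(M!i)" if "i < s" for i using that z by (simp add: zs_def nth_append)
  define tr where "tr B = {j. j < length zs \<and> zs!j \<in> B}" for B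
  define U where "U t = {i. i < s \<and> (i \<in> t \<longleftrightarrow> s+i \<notin> t)}" for t
  define Sg where "Sg t = {\<sigma>\<in>Pow {..<s}. \<forall>i\<in>U t. i\<in>\<sigma> \<longleftrightarrow> i\<in>t}" for t
  define Tr where "Tr = {t \<in> tr ` F. \<theta> \<le> real (card (U t))}"
  have trN: "i \<in> tr B \<longleftrightarrow> xs!(N!i) \<in> B" if "i < s" for i B using that zsN lzs by (auto simp: tr_def)
  have trM: "s+i \<in> tr B \<longleftrightarrow> xs!(M!i) \<in> B" if "i < s" for i B using that zsM lzs by (auto simp: tr_def)
  have sub: "{\<sigma>\<in>Pow {..<s}. sw \<sigma> s z \<in> Bad2} \<subseteq> (\<Union>t\<in>Tr. Sg t)"
  proof
    fix \<sigma> assume \<sigma>: "\<sigma> \<in> {\<sigma>\<in>Pow {..<s}. sw \<sigma> s z \<in> Bad2}"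
    then obtain B where B: "B \<in> F" "\<forall>i<s. xs!(fst (sw \<sigma> s z)!i) \<notin> B"
      "\<theta> \<le> real (card {i. i<s \<and> xs!(snd (sw \<sigma> s z)!i) \<in> B})"
      using Bad2 by auto
    define t where "t = tr B"
    have miss: "\<not> (if i\<in>\<sigma> then s+i \<in> t else i \<in> t)" if "i < s" for i
      using B(2) that sw_nth(1)[OF that, of \<sigma> z] trN[OF that] trM[OF that] z(1) by (auto simp: t_def)
    have hitU: "{i. i<s \<and> xs!(snd (sw \<sigma> s z)!i) \<in> B} \<subseteq> U t"
    proof
      fix i assume i: "i \<in> {i. i<s \<and> xs!(snd (sw \<sigma> s z)!i) \<in> B}"
      then have il: "i < s" by simp
      have "if i\<in>\<sigma> then i \<in> t else s+i \<in> t"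
        using i sw_nth(2)[OF il, of \<sigma> z] trN[OF il] trM[OF il] z(1) by (auto simp: t_def)
      then show "i \<in> U t" using miss[OF il] il by (auto simp: U_def split: if_splits)
    qed
    have "card {i. i<s \<and> xs!(snd (sw \<sigma> s z)!i) \<in> B} \<le> card (U t)"
      by (rule card_mono[OF _ hitU]) (simp add: U_def)
    then have "t \<in> Tr" using B(1,3) by (auto simp: Tr_def t_def)
    moreover have "\<sigma> \<in> Sg t"
    proof -
      have "\<forall>i\<in>U t. i\<in>\<sigma> \<longleftrightarrow> i\<in>t"
      proof
        fix i assume "i \<in> U t"
        then have il: "i < s" and ex: "i \<in> t \<longleftrightarrow> s+i \<notin> t" by (auto simp: U_def)
        show "i\<in>\<sigma> \<longleftrightarrow> i\<in>t" using miss[OF il] ex by (auto split: if_splits)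
      qed
      then show ?thesis using \<sigma> by (auto simp: Sg_def)
    qed
    ultimately show "\<sigma> \<in> (\<Union>t\<in>Tr. Sg t)" by blast
  qed
  have finTr: "finite Tr" using finF by (simp add: Tr_def)
  have cTr: "card Tr \<le> (2 * s + 1)^D"
  proof -
    have "card Tr \<le> card (tr ` F)" by (rule card_mono) (use finF in \<open>auto simp: Tr_def\<close>)
    also have "\<dots> \<le> (length zs + 1)^D" unfolding tr_def using spec[OF trb, of zs] zsP by (rule mp)
    finally show ?thesis using lzs by simp
  qed
  have cSg: "real (card (Sg t)) \<le> 2^s / 2 powr \<theta>" if "t \<in> Tr" for t
  proof -
    have Us: "U t \<subseteq> {..<s}" by (auto simp: U_def)
    have cU: "card (U t) \<le> s" using card_mono[OF _ Us] by simp
    have "card (Sg t) \<le> 2^(s - card (U t))" unfolding Sg_def by (rule card_Sigma_set[OF Us])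
    then have "real (card (Sg t)) \<le> real (2^(s - card (U t)))" by (simp only: of_nat_le_iff)
    also have "real (2^(s - card (U t))) = (2::real)^(s - card (U t))" by simp
    also have "(2::real)^(s - card (U t)) = 2^s / 2^card (U t)" using cU by (simp add: power_diff)
    also have "\<dots> \<le> 2^s / 2 powr \<theta>"
    proof (rule divide_left_mono)
      have "\<theta> \<le> real (card (U t))" using that by (simp add: Tr_def)
      then have "2 powr \<theta> \<le> 2 powr (real (card (U t)))" by simp
      then show "2 powr \<theta> \<le> 2^card (U t)" by (simp add: powr_realpow)
    qed simp_all
    finally show ?thesis .
  qed
  have "card {\<sigma>\<in>Pow {..<s}. sw \<sigma> s z \<in> Bad2} \<le> card (\<Union>t\<in>Tr. Sg t)"
    by (rule card_mono[OF _ sub]) (use finTr in \<open>auto simp: Sg_def\<close>)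
  also have "\<dots> \<le> (\<Sum>t\<in>Tr. card (Sg t))" by (rule card_UN_le[OF finTr])
  finally have "real (card {\<sigma>\<in>Pow {..<s}. sw \<sigma> s z \<in> Bad2}) \<le> real (\<Sum>t\<in>Tr. card (Sg t))"
    by (simp only: of_nat_le_iff)
  also have "\<dots> = (\<Sum>t\<in>Tr. real (card (Sg t)))" by (rule of_nat_sum)
  also have "\<dots> \<le> (\<Sum>t\<in>Tr. 2^s / 2 powr \<theta>)" by (rule sum_mono) (use cSg in auto)
  also have "\<dots> = real (card Tr) * (2^s / 2 powr \<theta>)" by simp
  also have "\<dots> \<le> real ((2 * s + 1)^D) * (2^s / 2 powr \<theta>)"
    by (rule mult_right_mono) (use cTr in \<open>simp_all del: of_nat_power\<close>)
  finally show ?thesis by simp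
qed

lemma half_aux: "(a::real) < b / 2 \<Longrightarrow> b \<le> c \<Longrightarrow> a < c / 2" by linarith

lemma swap_bound:
  fixes xs :: "'a list" and F :: "'a set set" and P :: "'a set" and D :: nat and \<theta> :: real
  assumes T: "T = length xs" and setxs: "set xs \<subseteq> P" and finF: "finite F"
  and trb: "\<forall>zs. set zs \<subseteq> P \<longrightarrow> card ((\<lambda>B. {j. j < length zs \<and> zs!j \<in> B}) ` F) \<le> (length zs + 1)^D"
  and Bad2: "Bad2 = {z \<in> Ls T s \<times> Ls T s. \<exists>B\<in>F. (\<forall>i<s. xs!(fst z!i) \<notin> B) \<and> \<theta> \<le> real (card {i. i<s \<and> xs!(snd z!i) \<in> B})}"
  shows "real (card Bad2) \<le> real (T^(2 * s)) * real ((2 * s + 1)^D) / 2 powr \<theta>"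
proof -
  define LL where "LL = Ls T s \<times> Ls T s"
  have finLL: "finite LL" by (simp add: LL_def finite_Ls)
  have BL: "Bad2 \<subseteq> LL" by (auto simp: Bad2 LL_def)
  have "(\<Sum>\<sigma>\<in>Pow {..<s}. card {z\<in>LL. sw \<sigma> s z \<in> Bad2}) = (\<Sum>\<sigma>\<in>Pow {..<s}. card Bad2)"
    by (intro sum.cong refl) (use count_swap[OF BL[unfolded LL_def]] in \<open>simp add: LL_def\<close>)
  also have "\<dots> = 2^s * card Bad2" by (simp add: card_Pow)
  finally have A: "(\<Sum>\<sigma>\<in>Pow {..<s}. card {z\<in>LL. sw \<sigma> s z \<in> Bad2}) = 2^s * card Bad2" .
  have B: "(\<Sum>\<sigma>\<in>Pow {..<s}. card {z\<in>LL. sw \<sigma> s z \<in> Bad2}) = (\<Sum>z\<in>LL. card {\<sigma>\<in>Pow {..<s}. sw \<sigma> s z \<in> Bad2})"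
    by (rule card_swap_sum) (simp_all add: finLL)
  have "real (2^s * card Bad2) = real (\<Sum>z\<in>LL. card {\<sigma>\<in>Pow {..<s}. sw \<sigma> s z \<in> Bad2})" using A B by simp
  also have "\<dots> = (\<Sum>z\<in>LL. real (card {\<sigma>\<in>Pow {..<s}. sw \<sigma> s z \<in> Bad2}))" by (rule of_nat_sum)
  also have "\<dots> \<le> (\<Sum>z\<in>LL. real ((2 * s + 1)^D) * 2^s / 2 powr \<theta>)"
    by (rule sum_mono) (rule per_z[OF T setxs finF trb Bad2], simp add: LL_def)
  also have "\<dots> = real (card LL) * (real ((2 * s + 1)^D) * 2^s / 2 powr \<theta>)" by simp
  also have "real (card LL) = real (T^(2 * s))" by (simp add: LL_def card_Ls card_cartesian_product power_add[symmetric] mult_2)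
  finally have "2^s * real (card Bad2) \<le> 2^s * (real (T^(2 * s)) * real ((2 * s + 1)^D) / 2 powr \<theta>)"
    by (simp add: field_simps)
  then show ?thesis by (simp only: mult_le_cancel_left_pos zero_less_power zero_less_numeral)
qed

lemma eps_net:
  fixes xs :: "'a list" and F :: "'a set set" and P :: "'a set" and D :: nat and \<epsilon> :: real and s :: nat
  assumes T: "T = length xs" and T0: "T > 0" and setxs: "set xs \<subseteq> P" and finF: "finite F"
  and trb: "\<forall>zs. set zs \<subseteq> P \<longrightarrow> card ((\<lambda>B. {j. j < length zs \<and> zs!j \<in> B}) ` F) \<le> (length zs + 1)^D"
  and heavy: "\<forall>B\<in>F. \<epsilon> * T \<le> real (card {j. j < T \<and> xs!j \<in> B})"
  and big: "8 \<le> s * \<epsilon>" and small: "2 * real ((2 * s + 1)^D) < 2 powr (s * \<epsilon> / 2)"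
  shows "\<exists>N\<in>Ls T s. \<forall>B\<in>F. \<exists>i<s. xs!(N!i) \<in> B"
proof (rule ccontr)
  assume "\<not> ?thesis"
  then have allbad: "\<forall>N\<in>Ls T s. \<exists>B. B \<in> F \<and> (\<forall>i<s. xs!(N!i) \<notin> B)" by blast
  from bchoice[OF allbad] obtain BN where BN: "\<forall>N\<in>Ls T s. BN N \<in> F \<and> (\<forall>i<s. xs!(N!i) \<notin> BN N)" by blast
  define \<theta> where "\<theta> = s * \<epsilon> / 2"
  define Bad2 where "Bad2 = {z \<in> Ls T s \<times> Ls T s. \<exists>B\<in>F. (\<forall>i<s. xs!(fst z!i) \<notin> B) \<and> \<theta> \<le> real (card {i. i<s \<and> xs!(snd z!i) \<in> B})}"
  define Good where "Good N = {M\<in>Ls T s. \<theta> \<le> real (card {i. i<s \<and> xs!(M!i) \<in> BN N})}" for N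
  have SG: "Sigma (Ls T s) Good \<subseteq> Bad2"
  proof
    fix z assume "z \<in> Sigma (Ls T s) Good"
    then obtain N M where z: "z = (N,M)" "N \<in> Ls T s" "M \<in> Good N" by blast
    have b1: "BN N \<in> F" "\<forall>i<s. xs!(N!i) \<notin> BN N" using BN z(2) by auto
    have b2: "M \<in> Ls T s" "\<theta> \<le> real (card {i. i<s \<and> xs!(M!i) \<in> BN N})" using z(3) by (auto simp: Good_def)
    have "\<exists>B\<in>F. (\<forall>i<s. xs!(N!i) \<notin> B) \<and> \<theta> \<le> real (card {i. i<s \<and> xs!(M!i) \<in> B})"
      using b1 b2 by blast
    then show "z \<in> Bad2" unfolding Bad2_def using z(1,2) b2(1) by simp
  qed
  have cG: "real (card (Good N)) \<ge> real (T^s) / 2" if N: "N \<in> Ls T s" for N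
  proof -
    define B where "B = BN N"
    have BF: "B \<in> F" using BN N by (simp add: B_def)
    define r where "r = {j. j < T \<and> xs!j \<in> B}"
    have ar: "{..<T} \<inter> r = r" by (auto simp: r_def)
    have hv: "\<epsilon> * T \<le> real (card r)" using heavy BF by (simp add: r_def)
    have eps0: "\<epsilon> > 0"
    proof (rule ccontr)
      assume "\<not> \<epsilon> > 0"
      then have "s * \<epsilon> \<le> 0" by (simp add: mult_nonneg_nonpos)
      then show False using big by linarith
    qed
    have mu: "real s * real (card ({..<T} \<inter> r)) / T \<ge> s * \<epsilon>"
    proof -
      have "real s * (\<epsilon> * T) \<le> real s * real (card r)" using hv by (simp add: mult_left_mono)
      then show ?thesis using T0 ar by (simp add: field_simps)
    qed
    have cc: "card {i. i<s \<and> xs!(M!i) \<in> B} = cnt M r" if M: "M \<in> Ls T s" for M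
    proof -
      have "cnt M r = card {i. i < length M \<and> M!i \<in> r}" by (simp add: cnt_def length_filter_conv_card)
      also have "{i. i < length M \<and> M!i \<in> r} = {i. i<s \<and> xs!(M!i) \<in> B}"
      proof -
        have "M!i < T" if "i < s" for i using M that nth_mem by (fastforce simp: Ls_def)
        then show ?thesis using M by (auto simp: Ls_def r_def)
      qed
      finally show ?thesis by simp
    qed
    have sub: "Ls T s - Good N \<subseteq> {M\<in>Ls T s. real (cnt M r) < real s * real (card ({..<T} \<inter> r)) / T / 2}"
    proof
      fix M assume M: "M \<in> Ls T s - Good N"
      then have "real (card {i. i<s \<and> xs!(M!i) \<in> B}) < \<theta>" by (auto simp: Good_def B_def)
      then have "real (cnt M r) < \<theta>" using cc M by simp
      then have "real (cnt M r) < real s * real (card ({..<T} \<inter> r)) / T / 2"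
        using half_aux mu unfolding \<theta>_def by blast
      then show "M \<in> {M\<in>Ls T s. real (cnt M r) < real s * real (card ({..<T} \<inter> r)) / T / 2}"
        using M by simp
    qed
    have "real (card (Ls T s - Good N)) \<le> real (T^s) / 2"
    proof -
      have "card (Ls T s - Good N) \<le> card {M\<in>Ls T s. real (cnt M r) < real s * real (card ({..<T} \<inter> r)) / T / 2}"
        by (rule card_mono[OF _ sub]) (simp add: finite_Ls)
      moreover have "real (card {M\<in>Ls T s. real (cnt M r) < real s * real (card ({..<T} \<inter> r)) / T / 2}) \<le> real (T^s) / 2"
        by (rule cheb_count[OF T0]) (use mu big in linarith)
      ultimately show ?thesis by linarith
    qed
    moreover have "card (Ls T s - Good N) = card (Ls T s) - card (Good N)"
      by (rule card_Diff_subset) (auto simp: Good_def finite_Ls)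
    moreover have "card (Good N) \<le> card (Ls T s)" by (rule card_mono) (auto simp: Good_def finite_Ls)
    ultimately show ?thesis by (simp add: card_Ls of_nat_diff)
  qed
  have "real (card (Sigma (Ls T s) Good)) = (\<Sum>N\<in>Ls T s. real (card (Good N)))"
    by (simp add: card_SigmaI finite_Ls Good_def)
  also have "\<dots> \<ge> (\<Sum>N\<in>Ls T s. real (T^s) / 2)" by (rule sum_mono) (use cG in auto)
  finally have "real (card (Sigma (Ls T s) Good)) \<ge> real (T^s) * real (T^s) / 2" by (simp add: card_Ls)
  moreover have "card (Sigma (Ls T s) Good) \<le> card Bad2"
    by (rule card_mono[OF _ SG]) (simp add: Bad2_def finite_Ls)
  moreover have "real (card Bad2) \<le> real (T^(2 * s)) * real ((2 * s + 1)^D) / 2 powr \<theta>"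
    by (rule swap_bound[OF T setxs finF trb]) (simp add: Bad2_def)
  ultimately have "real (T^s) * real (T^s) / 2 \<le> real (T^(2 * s)) * real ((2 * s + 1)^D) / 2 powr \<theta>" by linarith
  moreover have "real (T^(2 * s)) = real (T^s) * real (T^s)" by (simp add: power_add[symmetric] mult_2)
  ultimately have "real (T^s) * real (T^s) / 2 \<le> real (T^s) * real (T^s) * real ((2 * s + 1)^D) / 2 powr \<theta>" by simp
  moreover have Qp: "real (T^s) * real (T^s) > 0" using T0 by simp
  ultimately have "(real (T^s) * real (T^s)) * (1/2) \<le> (real (T^s) * real (T^s)) * (real ((2 * s + 1)^D) / 2 powr \<theta>)"
    by simp
  then have h: "1 / 2 \<le> real ((2 * s + 1)^D) / 2 powr \<theta>" using Qp by (simp only: mult_le_cancel_left_pos)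
  have Y: "2 powr \<theta> > 0" by simp
  have "2 powr \<theta> * (1/2) \<le> 2 powr \<theta> * (real ((2 * s + 1)^D) / 2 powr \<theta>)"
    using h Y by (simp only: mult_le_cancel_left_pos)
  then have "2 powr \<theta> \<le> 2 * real ((2 * s + 1)^D)" using Y by simp
  then show False using small by (simp add: \<theta>_def)
qed

lemma ln2_ge_half: "ln (2::real) \<ge> 1/2"
proof -
  have "ln (1/2::real) \<le> 1/2 - 1" by (rule ln_le_minus_one) simp
  then show ?thesis by (simp add: ln_div)
qed

lemma arith_params:
  fixes K0 :: real and D :: nat and p :: nat and W A :: real and s :: nat
  assumes K0: "K0 \<ge> 1" and p2: "p \<ge> 2"
  and W_def: "W = 16*K0*(2 + 10*D) + 5" and A_def: "A = W^2" and s_def: "s = nat \<lceil>A * p * ln p\<rceil>"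
  shows "8 \<le> s * (1/(4*K0*p)) \<and> 2 * real ((2 * s + 1)^D) < 2 powr (s * (1/(4*K0*p)) / 2) \<and> real s \<le> (A+1) * p * ln p"
proof -
  define L where "L = ln (real p)"
  have pr: "real p \<ge> 2" using p2 by simp
  have L2: "L \<ge> ln 2" unfolding L_def using pr by simp
  have Lh: "L \<ge> 1/2" using L2 ln2_ge_half by linarith
  have Lp: "L \<le> p" unfolding L_def using pr by (intro ln_bound) simp
  have W5: "W \<ge> 5" using K0 by (simp add: W_def)
  have WK: "W \<ge> 16*K0*(2 + 10*D)" by (simp add: W_def)
  have A5W: "A \<ge> 5 * W" unfolding A_def power2_eq_square using W5 by (simp add: mult_right_mono)
  have A25: "A \<ge> 25" using A5W W5 by linarith
  have x0: "A * p * L \<ge> 0" using A25 Lh by simp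
  have sge: "real s \<ge> A * p * L" unfolding s_def L_def by linarith
  have sle: "real s \<le> A * p * L + 1" unfolding s_def L_def using x0[unfolded L_def] by linarith
  define \<epsilon> where "\<epsilon> = 1/(4*K0*p)"
  have e0: "\<epsilon> > 0" using K0 pr by (simp add: \<epsilon>_def)
  have se: "real s * \<epsilon> \<ge> A * L / (4*K0)"
  proof -
    have "real s * \<epsilon> \<ge> A * p * L * \<epsilon>" using sge e0 by (simp add: mult_right_mono)
    also have "A * p * L * \<epsilon> = A * L / (4*K0)" using pr K0 by (simp add: \<epsilon>_def field_simps)
    finally show ?thesis .
  qed
  have c1: "8 \<le> real s * \<epsilon>"
  proof -
    have "16*K0*(2+10*D) = 32*K0 + 160*K0*D" by (simp add: algebra_simps)
    moreover have "160*K0*D \<ge> 0" using K0 by simp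
    ultimately have "W \<ge> 32*K0" using WK by linarith
    then have "A \<ge> 5 * (32*K0)" using A5W by linarith
    then have "A * L / (4*K0) \<ge> (160*K0) * (1/2) / (4*K0)"
      using Lh K0 by (intro divide_right_mono mult_mono) auto
    also have "(160*K0) * (1/2) / (4*K0) = 20" using K0 by simp
    finally show ?thesis using se by linarith
  qed
  have c2: "2 * real ((2 * s + 1)^D) < 2 powr (real s * \<epsilon> / 2)"
  proof -
    have s1: "real (2 * s + 1) \<le> 5 * A * (real p)^2"
    proof -
      have "real (2 * s + 1) \<le> 2 * (A * p * L + 1) + 1" using sle by simp
      also have "\<dots> \<le> 2 * (A * p * p) + 3" using Lp A25 pr by (simp add: mult_left_mono)
      also have "\<dots> \<le> 5 * A * (real p)^2"
      proof -
        have p1: "real p^2 \<ge> 1" using pr by (simp add: one_le_power)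
        have "A * real p^2 \<ge> A * 1" by (rule mult_left_mono) (use A25 p1 in auto)
        then have "3 \<le> 3 * A * (real p)^2" using A25 by linarith
        then show ?thesis by (simp add: power2_eq_square algebra_simps)
      qed
      finally show ?thesis .
    qed
    have pos: "real (2 * s + 1) > 0" by simp
    have lnS: "ln (real (2 * s + 1)) \<le> ln (5*A) + 2 * L"
    proof -
      have "ln (real (2 * s + 1)) \<le> ln (5 * A * (real p)^2)" using s1 pos by simp
      also have "\<dots> = ln (5*A) + 2 * L" using A25 pr by (simp add: ln_mult ln_realpow L_def)
      finally show ?thesis .
    qed
    have ln5A: "ln (5*A) \<le> 4 * W"
    proof -
      have "5 * A \<le> A^2" using A25 by (simp add: power2_eq_square mult_right_mono)
      then have "ln (5*A) \<le> ln (A^2)" using A25 by simp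
      also have "ln (A^2) = 4 * ln W" using W5 by (simp add: A_def ln_realpow)
      also have "\<dots> \<le> 4 * W" using ln_bound[of W] W5 by simp
      finally show ?thesis .
    qed
    have lhs: "ln (2 * real ((2 * s + 1)^D)) \<le> L * (2 + 8*D*W + 2*D)"
    proof -
      have "ln (2 * real ((2 * s + 1)^D)) = ln 2 + D * ln (real (2 * s + 1))"
        using pos by (simp add: ln_mult ln_realpow del: of_nat_Suc)
      also have "\<dots> \<le> ln 2 + D * (4*W + 2*L)"
        using lnS ln5A by (intro add_left_mono mult_left_mono) auto
      also have "\<dots> \<le> 2*L + D * (4*W*(2*L) + 2*L)"
      proof -
        have "ln 2 \<le> 2 * L" using ln_2_less_1 Lh by linarith
        moreover have "4*W \<le> 4*W*(2*L)" using Lh W5 by (simp add: mult_le_cancel_left1)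
        moreover have "D * (4*W + 2*L) \<le> D * (4*W*(2*L) + 2*L)"
          using \<open>4*W \<le> 4*W*(2*L)\<close> by (intro mult_left_mono) auto
        ultimately show ?thesis by linarith
      qed
      also have "\<dots> = L * (2 + 8*D*W + 2*D)" by (simp add: algebra_simps)
      finally show ?thesis .
    qed
    have rhs: "ln (2 powr (real s * \<epsilon> / 2)) \<ge> L * (A / (16*K0))"
    proof -
      have "ln (2 powr (real s * \<epsilon> / 2)) = (real s * \<epsilon> / 2) * ln 2" by (simp add: ln_powr)
      also have "\<dots> \<ge> (A * L / (4*K0) / 2) * (1/2)"
        using se ln2_ge_half e0 by (intro mult_mono) auto
      also have "(A * L / (4*K0) / 2) * (1/2) = L * (A / (16*K0))" using K0 by (simp add: field_simps)
      finally show ?thesis .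
    qed
    have key: "2 + 8*D*W + 2*D < A / (16*K0)"
    proof -
      have "A / (16*K0) = W * (W / (16*K0))" unfolding A_def power2_eq_square by simp
      moreover have h: "W / (16*K0) \<ge> 2 + 10*D" using WK K0 by (simp add: field_simps)
      moreover have "W * (2 + 10*D) \<le> W * (W / (16*K0))" by (rule mult_left_mono[OF h]) (use W5 in auto)
      ultimately have "A / (16*K0) \<ge> W * (2 + 10*D)" by linarith
      moreover have "W * (2 + 10*D) > 2 + 8*D*W + 2*D"
      proof -
        have "real D * W \<ge> real D * 1" by (rule mult_left_mono) (use W5 in auto)
        moreover have "W * (2 + 10*D) = 2*W + 8*D*W + 2*(D*W)" by (simp add: algebra_simps)
        ultimately show ?thesis using W5 by linarith
      qed
      ultimately show ?thesis by linarith
    qed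
    have "L * (2 + 8*D*W + 2*D) < L * (A / (16*K0))" by (rule mult_strict_left_mono[OF key]) (use Lh in linarith)
    then have "ln (2 * real ((2 * s + 1)^D)) < ln (2 powr (real s * \<epsilon> / 2))" using lhs rhs by linarith
    then show ?thesis using pos by (subst (asm) ln_less_cancel_iff) auto
  qed
  have c3: "real s \<le> (A+1) * p * L"
  proof -
    have "2*(1/2) \<le> real p * L" by (rule mult_mono) (use pr Lh in auto)
    then have "1 \<le> p * L" by simp
    then show ?thesis using sle by (simp add: algebra_simps)
  qed
  show ?thesis using c1 c2 c3 by (simp add: \<epsilon>_def L_def)
qed

theorem theorem2:
  fixes c :: real
  assumes "c > 0"
  shows "\<exists>C::real. \<forall>(d::nat) (p::nat) (F::(nat \<Rightarrow> real) set set).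
           p \<ge> 2 \<and> finite F \<and> (\<forall>B\<in>F. B \<noteq> {} \<and> B \<subseteq> euclid d) \<and>
           hereditarily_linear_delaunay c F (dual_edges d F) \<and> p2_property p F
           \<longrightarrow> (\<exists>T. finite T \<and> is_transversal d T F \<and>
                     real (card T) \<le> C * real p * ln (real p))"
proof -
  have cpos: "c \<ge> 0" using assms by simp
  define K0 where "K0 = 4*exp 1*c+1"
  have K01: "K0 \<ge> 1" using cpos by (simp add: K0_def)
  define D where "D = (nat \<lceil>2*c\<rceil> + 3) choose 2"
  define W where "W = 16*K0*real (2 + 10*D) + 5"
  define A where "A = W^2"
  have A0: "A \<ge> 0" by (simp add: A_def)
  show ?thesis
  proof (intro exI[of _ "A+1"] allI impI)
    fix d p and F :: "(nat \<Rightarrow> real) set set"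
    assume H: "p \<ge> 2 \<and> finite F \<and> (\<forall>B\<in>F. B \<noteq> {} \<and> B \<subseteq> euclid d) \<and>
           hereditarily_linear_delaunay c F (dual_edges d F) \<and> p2_property p F"
    then have p2: "p \<ge> 2" and finF: "finite F" and regs0: "\<forall>B\<in>F. B \<noteq> {} \<and> B \<subseteq> euclid d"
      and hlD: "hereditarily_linear_delaunay c F (dual_edges d F)" and pp: "p2_property p F" by auto
    define P where "P = euclid d"
    have regs: "\<forall>B\<in>F. B \<subseteq> P \<and> B \<noteq> {}" using regs0 by (auto simp: P_def)
    have hl: "\<forall>R\<subseteq>F. real (card (delaunay_edges (restrict_edges ((\<lambda>x. {B\<in>F. x\<in>B}) ` P) R))) \<le> c * card R"
    proof (intro allI impI)
      fix R assume RF: "R \<subseteq> F"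
      show "real (card (delaunay_edges (restrict_edges ((\<lambda>x. {B\<in>F. x\<in>B}) ` P) R))) \<le> c * card R"
      proof (cases "R = {}")
        case True
        have "delaunay_edges (restrict_edges ((\<lambda>x. {B\<in>F. x\<in>B}) ` P) R) = {}"
          using True by (auto simp: delaunay_edges_def restrict_edges_def)
        then show ?thesis using True by simp
      next
        case False
        then have "real (card (delaunay_edges (restrict_edges (dual_edges d F) R))) < c * card R"
          using hlD RF unfolding hereditarily_linear_delaunay_def by blast
        then show ?thesis by (simp add: dual_edges_def P_def)
      qed
    qed
    have p1: "p \<ge> 1" using p2 by simp
    show "\<exists>T. finite T \<and> is_transversal d T F \<and> real (card T) \<le> (A+1) * real p * ln (real p)"
    proof (cases "F = {}")
      case True
      have "0 \<le> (A+1) * real p * ln (real p)" using A0 p2 by simp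
      then show ?thesis using True by (intro exI[of _ "{}"]) (simp add: is_transversal_def)
    next
      case False
      obtain xs where xs: "xs \<noteq> []" "set xs \<subseteq> P"
        "\<forall>B\<in>F. real (length xs) \<le> real (cnt xs B) * (4*((4*exp 1*c+1)*p))"
        using frac_cover[OF finF regs hl cpos pp p1 False] by blast
      define T where "T = length xs"
      have T0: "T > 0" using xs(1) by (simp add: T_def)
      define s where "s = nat \<lceil>A * p * ln p\<rceil>"
      have ar: "8 \<le> s * (1/(4*K0*p)) \<and> 2 * real ((2 * s + 1)^D) < 2 powr (s * (1/(4*K0*p)) / 2) \<and> real s \<le> (A+1) * p * ln p"
        by (rule arith_params[OF K01 p2 W_def A_def s_def])
      have trb: "\<forall>zs. set zs \<subseteq> P \<longrightarrow> card ((\<lambda>B. {j. j < length zs \<and> zs!j \<in> B}) ` F) \<le> (length zs + 1)^D"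
        using trace_bound[OF hl cpos _ finF] unfolding D_def by blast
      have heavy: "\<forall>B\<in>F. (1/(4*K0*p)) * T \<le> real (card {j. j < T \<and> xs!j \<in> B})"
      proof
        fix B assume BF: "B \<in> F"
        have "cnt xs B = card {j. j < T \<and> xs!j \<in> B}" by (simp add: cnt_def T_def length_filter_conv_card)
        moreover have "real T \<le> real (cnt xs B) * (4*(K0*p))" using xs(3) BF by (simp add: T_def K0_def)
        moreover have "4*K0*p > 0" using K01 p1 by simp
        ultimately show "(1/(4*K0*p)) * T \<le> real (card {j. j < T \<and> xs!j \<in> B})"
          by (simp add: field_simps)
      qed
      obtain N where N: "N \<in> Ls T s" "\<forall>B\<in>F. \<exists>i<s. xs!(N!i) \<in> B"
        using eps_net[OF T_def T0 xs(2) finF trb heavy] ar by blast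
      define Tr where "Tr = (\<lambda>i. xs!(N!i)) ` {..<s}"
      have finTr: "finite Tr" by (simp add: Tr_def)
      have cTr: "card Tr \<le> s" unfolding Tr_def using card_image_le[of "{..<s}" "\<lambda>i. xs!(N!i)"] by simp
      have TrP: "Tr \<subseteq> P"
      proof
        fix y assume "y \<in> Tr"
        then obtain i where i: "i < s" "y = xs!(N!i)" by (auto simp: Tr_def)
        have "N!i \<in> set N" using i N(1) by (auto simp: Ls_def)
        then have "N!i < length xs" using N(1) by (auto simp: Ls_def T_def)
        then show "y \<in> P" using i xs(2) nth_mem by blast
      qed
      have tr: "is_transversal d Tr F"
        unfolding is_transversal_def
      proof
        show "Tr \<subseteq> euclid d" using TrP by (simp add: P_def)
        show "\<forall>B\<in>F. Tr \<inter> B \<noteq> {}"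
        proof
          fix B assume "B \<in> F"
          then obtain i where "i < s" "xs!(N!i) \<in> B" using N(2) by blast
          then show "Tr \<inter> B \<noteq> {}" by (auto simp: Tr_def)
        qed
      qed
      have "real (card Tr) \<le> real s" using cTr by simp
      also have "\<dots> \<le> (A+1) * p * ln p" using ar by blast
      finally show ?thesis using finTr tr by blast
    qed
  qed
qed

end
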